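(* Let $m,n\in\mathbb N$, $M_A=M_m(\mathbb C)$, $M_B=M_n(\mathbb C)$, let $U_A\in M_A$, $U_B\in M_B$ be unitary matrices, and let $\psi:M_A\to M_B$ be a quantum $(U_A,U_B)$-channel. Then the following are equivalent: (1) $\psi$ is $(U_A,U_B)$-entanglement breaking; (2) $\psi$ is in $(U_A,U_B)$-Holevo form.
   Context: For a unitary $U\in M_k(\mathbb C)$, a matrix $X$ is $U$-positive if $U^*X\ge0$; $X$ is a $U$-density matrix (quantum $U$-state) if moreover $\mathrm{Tr}(U^*X)=1$. For $r\in\mathbb N$, $U^r=\mathrm{diag}(U,\dots,U)$. A linear map $\psi:M_A\to M_B$ is $(U_A,U_B)$-CP if for every $r$ and every $V=[V_{ij}]\in M_r(M_A)$ with $(U_A^r)^*V\ge0$ one has $(U_B^r)^*[\psi(V_{ij})]\ge0$; it is a quantum $(U_A,U_B)$-channel if it is $(U_A,U_B)$-CP and $\phi(V):=U_B^*\psi(U_AV)$ is trace preserving (i.e. $\phi$ is a quantum channel). For unitaries $W_1\in M_p(\mathbb C)$, $W_2\in M_q(\mathbb C)$, a quantum $W_1\otimes W_2$-state $\rho\in M_p\otimes M_q$ is $W_1\otimes W_2$-separable if it is a convex combination of quantum $W_1\otimes W_2$-states of the form $\rho_1\otimes\rho_2$ with $\rho_1$ $W_1$-positive and $\rho_2$ $W_2$-positive. $\psi$ is $(U_A,U_B)$-entanglement breaking if for every $k\in\mathbb N$ and every $I_k\otimes U_A$-density matrix $S\in M_k(\mathbb C)\otimes M_A$, the matrix $(\mathrm{id}_k\otimes\psi)(S)$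 is $I_k\otimes U_B$-separable. $\psi$ is in $(U_A,U_B)$-Holevo form if $\psi(\rho)=\sum_k D_k\,\mathrm{Tr}(F_k\rho)$ for all $\rho\in M_A$ (finite sum), where each $D_k\in M_B$ is a $U_B$-density matrix and $\{F_k\}\subset M_A$ is a $U_A$-positive operator valued measure, i.e. each $F_kU_A$ is positive semidefinite and $\sum_kF_kU_A=I_A$. *)

theory Defs
  imports "Jordan_Normal_Form.Matrix"
begin

text \<open>Matrices of arbitrary size are represented by the type complex mat of
  Jordan_Normal_Form; M_d(C) is carrier_mat d d.\<close>

definition cadj :: "complex mat \<Rightarrow> complex mat" where
  "cadj A = mat (dim_col A) (dim_row A) (\<lambda>(i,j). cnj (A $$ (j,i)))"

definition mtrace :: "complex mat \<Rightarrow> complex" where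
  "mtrace A = (\<Sum>i<dim_row A. A $$ (i,i))"

definition unitary_mat :: "nat \<Rightarrow> complex mat \<Rightarrow> bool" where
  "unitary_mat d U \<longleftrightarrow> U \<in> carrier_mat d d \<and> cadj U * U = 1\<^sub>m d \<and> U * cadj U = 1\<^sub>m d"

definition psd :: "nat \<Rightarrow> complex mat \<Rightarrow> bool" where
  "psd d A \<longleftrightarrow> A \<in> carrier_mat d d \<and> cadj A = A \<and>
     (\<forall>v \<in> carrier_vec d. 0 \<le> Re (map_vec cnj v \<bullet> (A *\<^sub>v v)))"

definition kron :: "complex mat \<Rightarrow> complex mat \<Rightarrow> complex mat" where
  "kron A B = mat (dim_row A * dim_row B) (dim_col A * dim_col B)
     (\<lambda>(i,j). A $$ (i div dim_row B, j div dim_col B) * B $$ (i mod dim_row B, j mod dim_col B))"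

definition blockdiag :: "nat \<Rightarrow> complex mat \<Rightarrow> complex mat" where
  "blockdiag r U = kron (1\<^sub>m r) U"

definition blk :: "nat \<Rightarrow> complex mat \<Rightarrow> nat \<Rightarrow> nat \<Rightarrow> complex mat" where
  "blk d V a b = mat d d (\<lambda>(i,j). V $$ (a * d + i, b * d + j))"

text \<open>Blockwise application [\<psi>(V_ij)] = (id_r \<otimes> \<psi>)(V) for V in M_r(M_m), output in M_r(M_n).\<close>
definition blockmap :: "nat \<Rightarrow> nat \<Rightarrow> nat \<Rightarrow> (complex mat \<Rightarrow> complex mat) \<Rightarrow> complex mat \<Rightarrow> complex mat" where
  "blockmap r m n \<psi> V = mat (r * n) (r * n)
     (\<lambda>(i,j). \<psi> (blk m V (i div n) (j div n)) $$ (i mod n, j mod n))"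

definition U_positive :: "nat \<Rightarrow> complex mat \<Rightarrow> complex mat \<Rightarrow> bool" where
  "U_positive d U X \<longleftrightarrow> X \<in> carrier_mat d d \<and> psd d (cadj U * X)"

definition U_density :: "nat \<Rightarrow> complex mat \<Rightarrow> complex mat \<Rightarrow> bool" where
  "U_density d U X \<longleftrightarrow> U_positive d U X \<and> mtrace (cadj U * X) = 1"

definition lin_map :: "nat \<Rightarrow> nat \<Rightarrow> (complex mat \<Rightarrow> complex mat) \<Rightarrow> bool" where
  "lin_map m n \<psi> \<longleftrightarrow>
     (\<forall>A \<in> carrier_mat m m. \<psi> A \<in> carrier_mat n n) \<and>
     (\<forall>A \<in> carrier_mat m m. \<forall>B \<in> carrier_mat m m. \<psi> (A + B) = \<psi> A + \<psi> B) \<and>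
     (\<forall>A \<in> carrier_mat m m. \<forall>c::complex. \<psi> (c \<cdot>\<^sub>m A) = c \<cdot>\<^sub>m \<psi> A)"

definition U_CP :: "nat \<Rightarrow> nat \<Rightarrow> complex mat \<Rightarrow> complex mat \<Rightarrow> (complex mat \<Rightarrow> complex mat) \<Rightarrow> bool" where
  "U_CP m n UA UB \<psi> \<longleftrightarrow>
     (\<forall>r. \<forall>V \<in> carrier_mat (r * m) (r * m).
        psd (r * m) (cadj (blockdiag r UA) * V) \<longrightarrow>
        psd (r * n) (cadj (blockdiag r UB) * blockmap r m n \<psi> V))"

definition U_channel :: "nat \<Rightarrow> nat \<Rightarrow> complex mat \<Rightarrow> complex mat \<Rightarrow> (complex mat \<Rightarrow> complex mat) \<Rightarrow> bool" where
  "U_channel m n UA UB \<psi> \<longleftrightarrow> lin_map m n \<psi> \<and> U_CP m n UA UB \<psi> \<and>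
     (\<forall>V \<in> carrier_mat m m. mtrace (cadj UB * \<psi> (UA * V)) = mtrace V)"

fun msum :: "nat \<Rightarrow> (nat \<Rightarrow> complex mat) \<Rightarrow> nat \<Rightarrow> complex mat" where
  "msum d f 0 = 0\<^sub>m d d"
| "msum d f (Suc K) = msum d f K + f K"

definition W_separable :: "nat \<Rightarrow> nat \<Rightarrow> complex mat \<Rightarrow> complex mat \<Rightarrow> complex mat \<Rightarrow> bool" where
  "W_separable p q W1 W2 \<rho> \<longleftrightarrow> U_density (p * q) (kron W1 W2) \<rho> \<and>
     (\<exists>N (lam :: nat \<Rightarrow> real) \<rho>1 \<rho>2.
        (\<forall>i<N. 0 \<le> lam i) \<and> (\<Sum>i<N. lam i) = 1 \<and>
        (\<forall>i<N. U_positive p W1 (\<rho>1 i) \<and> U_positive q W2 (\<rho>2 i) \<and>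
               U_density (p * q) (kron W1 W2) (kron (\<rho>1 i) (\<rho>2 i))) \<and>
        \<rho> = msum (p * q) (\<lambda>i. complex_of_real (lam i) \<cdot>\<^sub>m kron (\<rho>1 i) (\<rho>2 i)) N)"

definition U_EB :: "nat \<Rightarrow> nat \<Rightarrow> complex mat \<Rightarrow> complex mat \<Rightarrow> (complex mat \<Rightarrow> complex mat) \<Rightarrow> bool" where
  "U_EB m n UA UB \<psi> \<longleftrightarrow>
     (\<forall>k. \<forall>S \<in> carrier_mat (k * m) (k * m).
        U_density (k * m) (kron (1\<^sub>m k) UA) S \<longrightarrow>
        W_separable k n (1\<^sub>m k) UB (blockmap k m n \<psi> S))"

definition U_Holevo :: "nat \<Rightarrow> nat \<Rightarrow> complex mat \<Rightarrow> complex mat \<Rightarrow> (complex mat \<Rightarrow> complex mat) \<Rightarrow> bool" where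
  "U_Holevo m n UA UB \<psi> \<longleftrightarrow>
     (\<exists>K D F.
        (\<forall>k<K. U_density n UB (D k)) \<and>
        (\<forall>k<K. F k \<in> carrier_mat m m \<and> psd m (F k * UA)) \<and>
        msum m (\<lambda>k. F k * UA) K = 1\<^sub>m m \<and>
        (\<forall>\<rho> \<in> carrier_mat m m. \<psi> \<rho> = msum n (\<lambda>k. mtrace (F k * \<rho>) \<cdot>\<^sub>m D k) K))"

end

theory Submission
  imports Defs
begin

lemma sum_split_mult:
  "(\<Sum>x<k*d. f x) = (\<Sum>a<(k::nat). \<Sum>i<d. f (a*d+i)::'a::comm_monoid_add)"
proof (induction k)
  case 0 then show ?case by simp
next
  case (Suc k)
  have e: "{..<Suc k * d} = {..<k*d} \<union> {k*d..<k*d+d}" by auto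
  have "(\<Sum>x<Suc k*d. f x) = (\<Sum>x<k*d. f x) + (\<Sum>x\<in>{k*d..<k*d+d}. f x)"
    unfolding e by (rule sum.union_disjoint) auto
  also have "(\<Sum>x\<in>{k*d..<k*d+d}. f x) = (\<Sum>i<d. f (k*d+i))"
  proof -
    have "(\<Sum>x\<in>{k*d..<k*d+d}. f x) = (\<Sum>i\<in>{0..<d}. f (i + k*d))"
      using sum.shift_bounds_nat_ivl[of f 0 "k*d" d] by (simp add: add.commute)
    then show ?thesis by (simp add: atLeast0LessThan add.commute)
  qed
  finally show ?case using Suc by simp
qed

lemma divmod_lt: "(x::nat) < k*d \<Longrightarrow> x div d < k \<and> x mod d < d"
  by (metis less_mult_imp_div_less mod_less_divisor mult.commute mult_0_right neq0_conv not_less0)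

lemma adm_div[simp]: "(i::nat) < d \<Longrightarrow> (a*d+i) div d = a"
  by simp
lemma adm_mod[simp]: "(i::nat) < d \<Longrightarrow> (a*d+i) mod d = i"
  by simp
lemma adm_lt: "(a::nat) < k \<Longrightarrow> i < d \<Longrightarrow> a*d+i < k*d"
proof -
  assume "a < k" "i < d"
  then have "a*d + i < a*d + d" by simp
  also have "\<dots> = (a+1)*d" by simp
  also have "\<dots> \<le> k*d" using \<open>a<k\<close> by (intro mult_right_mono) auto
  finally show ?thesis .
qed

lemma mult_entry:
  assumes "A \<in> carrier_mat r p" "B \<in> carrier_mat p c" "i < r" "j < c"
  shows "(A*B) $$ (i,j) = (\<Sum>q<p. A $$ (i,q) * B $$ (q,j))"
  using assms by (auto simp: scalar_prod_def atLeast0LessThan intro!: sum.cong)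

lemma cadj_carrier[simp]: "A \<in> carrier_mat r c \<Longrightarrow> cadj A \<in> carrier_mat c r"
  by (auto simp: cadj_def)
lemma cadj_dims[simp]: "dim_row (cadj A) = dim_col A" "dim_col (cadj A) = dim_row A"
  by (auto simp: cadj_def)
lemma cadj_entry[simp]: "i < dim_col A \<Longrightarrow> j < dim_row A \<Longrightarrow> cadj A $$ (i,j) = cnj (A $$ (j,i))"
  by (auto simp: cadj_def)

lemma cadj_mult_entry:
  assumes "A \<in> carrier_mat p r" "B \<in> carrier_mat p c" "i < r" "j < c"
  shows "(cadj A*B) $$ (i,j) = (\<Sum>q<p. cnj (A $$ (q,i)) * B $$ (q,j))"
  using assms by (subst mult_entry[of _ r p]) auto

lemma mtrace_sum: "A \<in> carrier_mat d d \<Longrightarrow> mtrace A = (\<Sum>i<d. A $$ (i,i))"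
  by (simp add: mtrace_def)

definition qf :: "nat \<Rightarrow> complex mat \<Rightarrow> (nat \<Rightarrow> complex) \<Rightarrow> complex" where
  "qf d A f = (\<Sum>i<d. \<Sum>j<d. cnj (f i) * A $$ (i,j) * f j)"

definition herm :: "nat \<Rightarrow> complex mat \<Rightarrow> bool" where
  "herm d A \<longleftrightarrow> (\<forall>i<d. \<forall>j<d. cnj (A $$ (j,i)) = A $$ (i,j))"

lemma psd_iff: "psd d A \<longleftrightarrow> A \<in> carrier_mat d d \<and> herm d A \<and> (\<forall>f. 0 \<le> Re (qf d A f))"
proof
  assume p: "psd d A"
  then have A: "A \<in> carrier_mat d d" and h: "cadj A = A" by (auto simp: psd_def)
  have "herm d A" unfolding herm_def
  proof (intro allI impI)
    fix i j assume "i < d" "j < d"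
    then have "cadj A $$ (i,j) = A $$ (i,j)" using h by simp
    then show "cnj (A $$ (j,i)) = A $$ (i,j)" using A \<open>i<d\<close> \<open>j<d\<close> by simp
  qed
  moreover have "0 \<le> Re (qf d A f)" for f
  proof -
    have v: "vec d f \<in> carrier_vec d" by simp
    have "map_vec cnj (vec d f) \<bullet> (A *\<^sub>v vec d f) = qf d A f"
      using A by (auto simp: qf_def scalar_prod_def atLeast0LessThan sum_distrib_left mult.assoc intro!: sum.cong)
    then show ?thesis using p v unfolding psd_def by metis
  qed
  ultimately show "A \<in> carrier_mat d d \<and> herm d A \<and> (\<forall>f. 0 \<le> Re (qf d A f))" using A by auto
next
  assume a: "A \<in> carrier_mat d d \<and> herm d A \<and> (\<forall>f. 0 \<le> Re (qf d A f))"
  then have A: "A \<in> carrier_mat d d" by auto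
  have "cadj A = A"
    by (rule eq_matI) (use a in \<open>auto simp: herm_def\<close>)
  moreover have "0 \<le> Re (map_vec cnj v \<bullet> (A *\<^sub>v v))" if v: "v \<in> carrier_vec d" for v
  proof -
    have "map_vec cnj v \<bullet> (A *\<^sub>v v) = qf d A (\<lambda>i. v $ i)"
      using A v by (auto simp: qf_def scalar_prod_def atLeast0LessThan sum_distrib_left mult.assoc intro!: sum.cong)
    then show ?thesis using a by auto
  qed
  ultimately show "psd d A" using A by (auto simp: psd_def)
qed

lemma qf_add: "qf d A (\<lambda>p. f p + g p) = qf d A f + qf d A g
   + (\<Sum>i<d. \<Sum>j<d. cnj (f i) * A$$(i,j) * g j) + (\<Sum>i<d. \<Sum>j<d. cnj (g i) * A$$(i,j) * f j)"
  unfolding qf_def by (simp add: distrib_left distrib_right sum.distrib)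

lemma sum_delta_r: "(t::nat) < d \<Longrightarrow> (\<Sum>j<d. g j * (if j = t then x else 0)) = g t * (x::complex)"
proof -
  assume t: "t < d"
  have "(\<Sum>j<d. g j * (if j = t then x else 0)) = (\<Sum>j<d. if j = t then g t * x else 0)"
    by (rule sum.cong) auto
  also have "\<dots> = g t * x" using t by simp
  finally show ?thesis .
qed

lemma sum_delta_l: "(t::nat) < d \<Longrightarrow> (\<Sum>j<d. (if j = t then x else 0) * g j) = (x::complex) * g t"
  using sum_delta_r[of t d g x] by (simp add: mult.commute)

lemma cnj_if0: "cnj (if P then x else 0) = (if P then cnj x else 0)" by simp

lemma qf_delta:
  assumes h: "herm d A" and t: "t < d"
  shows "qf d A (\<lambda>p. f p + (if p = t then x else 0)) =
     qf d A f + cnj x * (\<Sum>j<d. A$$(t,j) * f j) + x * cnj (\<Sum>j<d. A$$(t,j) * f j) + cnj x * x * A$$(t,t)"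
proof -
  let ?g = "\<lambda>p. if p = t then x else 0"
  have "qf d A ?g = (\<Sum>i<d. cnj (?g i) * A$$(i,t) * x)"
    unfolding qf_def using sum_delta_r[OF t] by simp
  also have "\<dots> = (\<Sum>i<d. (if i = t then cnj x else 0) * (A$$(i,t) * x))"
    by (simp add: cnj_if0 mult.assoc)
  also have "\<dots> = cnj x * x * A$$(t,t)" using sum_delta_l[OF t] by simp
  finally have 1: "qf d A ?g = cnj x * x * A$$(t,t)" .
  have 2: "(\<Sum>i<d. \<Sum>j<d. cnj (f i) * A$$(i,j) * ?g j) = x * cnj (\<Sum>j<d. A$$(t,j) * f j)"
  proof -
    have "(\<Sum>i<d. \<Sum>j<d. cnj (f i) * A$$(i,j) * ?g j) = (\<Sum>i<d. cnj (f i) * A$$(i,t) * x)"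
      using sum_delta_r[OF t] by simp
    also have "\<dots> = (\<Sum>i<d. x * cnj (A$$(t,i) * f i))"
      using h unfolding herm_def
      by (intro sum.cong refl) (metis (no_types, lifting) complex_cnj_mult lessThan_iff mult.commute t)
    finally show ?thesis by (simp add: sum_distrib_left)
  qed
  have 3: "(\<Sum>i<d. \<Sum>j<d. cnj (?g i) * A$$(i,j) * f j) = cnj x * (\<Sum>j<d. A$$(t,j) * f j)"
  proof -
    have "(\<Sum>i<d. \<Sum>j<d. cnj (?g i) * A$$(i,j) * f j) = (\<Sum>i<d. (if i = t then cnj x else 0) * (\<Sum>j<d. A$$(i,j) * f j))"
      by (simp add: cnj_if0 sum_distrib_left mult.assoc)
    also have "\<dots> = cnj x * (\<Sum>j<d. A$$(t,j) * f j)" using sum_delta_l[OF t] by simp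
    finally show ?thesis .
  qed
  show ?thesis
    unfolding qf_add 1 2 3 by (simp add: algebra_simps)
qed

lemma psd_herm: "psd d A \<Longrightarrow> herm d A" by (simp add: psd_iff)
lemma psd_carrier: "psd d A \<Longrightarrow> A \<in> carrier_mat d d" by (simp add: psd_iff)
lemma psd_qf: "psd d A \<Longrightarrow> 0 \<le> Re (qf d A f)" by (simp add: psd_iff)

lemma psd_diag:
  assumes p: "psd d A" and i: "i < d"
  shows "Im (A$$(i,i)) = 0" "0 \<le> Re (A$$(i,i))"
proof -
  have "cnj (A$$(i,i)) = A$$(i,i)" using psd_herm[OF p] i by (simp add: herm_def)
  then show "Im (A$$(i,i)) = 0" by (metis Reals_cnj_iff complex_is_Real_iff)
  have "qf d A (\<lambda>p. 0 + (if p = i then 1 else 0)) = A$$(i,i)"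
    using qf_delta[OF psd_herm[OF p] i, of "\<lambda>_. 0" 1] by (simp add: qf_def)
  then show "0 \<le> Re (A$$(i,i))" using psd_qf[OF p] by metis
qed

lemma psd_diag_real: "psd d A \<Longrightarrow> i < d \<Longrightarrow> A$$(i,i) = complex_of_real (Re (A$$(i,i)))"
  using psd_diag by (simp add: complex_eq_iff)

lemma psd_zero_row:
  assumes p: "psd d A" and t: "t < d" and z: "A$$(t,t) = 0" and j: "j < d"
  shows "A$$(t,j) = 0"
proof (rule ccontr)
  let ?b = "A$$(t,j)"
  assume nz: "?b \<noteq> 0"
  let ?f = "\<lambda>p. if p = j then (1::complex) else 0"
  have b: "(\<Sum>q<d. A$$(t,q) * ?f q) = ?b" using j by (simp add: if_distrib sum.delta cong: if_cong)
  define s where "s = (\<bar>Re (qf d A ?f)\<bar> + 1) / (2 * (cmod ?b)^2)"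
  have spos: "s > 0" using nz by (simp add: s_def)
  let ?x = "- complex_of_real s * ?b"
  have "qf d A (\<lambda>p. ?f p + (if p = t then ?x else 0)) = qf d A ?f + cnj ?x * ?b + ?x * cnj ?b"
    using qf_delta[OF psd_herm[OF p] t, of ?f ?x] b z by simp
  moreover have "Re (cnj ?x * ?b + ?x * cnj ?b) = - 2 * s * (cmod ?b)^2"
    by (simp add: cmod_def algebra_simps power2_eq_square)
  moreover have "2 * s * (cmod ?b)^2 = \<bar>Re (qf d A ?f)\<bar> + 1" using nz by (simp add: s_def)
  ultimately have "Re (qf d A (\<lambda>p. ?f p + (if p = t then ?x else 0))) < 0" by simp
  then show False using psd_qf[OF p] by (metis not_less)
qed

lemma cs_alg:
  fixes b :: complex and a :: real
  assumes "a > 0"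
  shows "Re (cnj (- b / complex_of_real a) * b + (- b / complex_of_real a) * cnj b
     + cnj (- b / complex_of_real a) * (- b / complex_of_real a) * complex_of_real a) = - ((cmod b)^2 / a)"
  using assms by (simp add: cmod_def power2_eq_square field_simps)

lemma psd_cs:
  assumes p: "psd d A" and t: "t < d" and a: "Re (A$$(t,t)) > 0"
  shows "(cmod (\<Sum>j<d. A$$(t,j) * f j))^2 / Re (A$$(t,t)) \<le> Re (qf d A f)"
proof -
  let ?b = "\<Sum>j<d. A$$(t,j) * f j"
  let ?a = "Re (A$$(t,t))"
  have at: "A$$(t,t) = complex_of_real ?a" using psd_diag_real[OF p t] .
  let ?x = "- ?b / complex_of_real ?a"
  have "qf d A (\<lambda>p. f p + (if p = t then ?x else 0)) =
     qf d A f + cnj ?x * ?b + ?x * cnj ?b + cnj ?x * ?x * complex_of_real ?a"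
    using qf_delta[OF psd_herm[OF p] t, of f ?x] at by simp
  moreover have "Re (cnj ?x * ?b + ?x * cnj ?b + cnj ?x * ?x * complex_of_real ?a) = - ((cmod ?b)^2 / ?a)"
    by (rule cs_alg[OF a])
  ultimately have "Re (qf d A (\<lambda>p. f p + (if p = t then ?x else 0))) = Re (qf d A f) - (cmod ?b)^2 / ?a"
    by simp
  then show ?thesis using psd_qf[OF p, of "\<lambda>p. f p + (if p = t then ?x else 0)"] by simp
qed

lemma psd_decomp_aux:
  "t \<le> d \<Longrightarrow> psd d A \<Longrightarrow> (\<forall>i<d. \<forall>j<d. (i < t \<or> j < t) \<longrightarrow> A$$(i,j) = 0) \<Longrightarrow>
   \<exists>(N::nat) w. \<forall>i<d. \<forall>j<d. A$$(i,j) = (\<Sum>r<N. w r i * cnj (w r j))"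
proof (induction "d - t" arbitrary: t A)
  case 0
  then have "t = d" by simp
  then have "\<forall>i<d. \<forall>j<d. A$$(i,j) = 0" using 0 by auto
  then show ?case by (intro exI[of _ "0::nat"]) simp
next
  case (Suc k)
  then have t: "t < d" and k: "k = d - Suc t" by auto
  note p = Suc.prems(2) and z = Suc.prems(3)
  have hA: "herm d A" using psd_herm[OF p] .
  show ?case
  proof (cases "A$$(t,t) = 0")
    case True
    have "\<forall>i<d. \<forall>j<d. (i < Suc t \<or> j < Suc t) \<longrightarrow> A$$(i,j) = 0"
    proof (intro allI impI)
      fix i j assume ij: "i < d" "j < d" "i < Suc t \<or> j < Suc t"
      show "A$$(i,j) = 0"
      proof (cases "i = t")
        case True then show ?thesis using psd_zero_row[OF p t \<open>A$$(t,t)=0\<close> ij(2)] by simp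
      next
        case False
        show ?thesis
        proof (cases "j = t")
          case True
          have "A$$(t,i) = 0" using psd_zero_row[OF p t \<open>A$$(t,t)=0\<close> ij(1)] .
          moreover have "cnj (A$$(t,i)) = A$$(i,t)" using hA ij t unfolding herm_def by blast
          ultimately show ?thesis using True by simp
        next
          case False
          then show ?thesis using \<open>i \<noteq> t\<close> ij z by auto
        qed
      qed
    qed
    moreover have "Suc t \<le> d" using t by simp
    ultimately show ?thesis using Suc.hyps(1)[of "Suc t" A] k p by blast
  next
    case False
    define a where "a = Re (A$$(t,t))"
    have at: "A$$(t,t) = complex_of_real a" unfolding a_def by (rule psd_diag_real[OF p t])
    have "a \<ge> 0" using psd_diag(2)[OF p t] a_def by simp
    moreover have "a \<noteq> 0" using False at by auto
    ultimately have apos: "a > 0" by simp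
    define w0 where "w0 i = A$$(i,t) / complex_of_real (sqrt a)" for i
    define A' where "A' = mat d d (\<lambda>(i,j). A$$(i,j) - w0 i * cnj (w0 j))"
    have A'e: "A'$$(i,j) = A$$(i,j) - w0 i * cnj (w0 j)" if "i<d" "j<d" for i j
      using that by (simp add: A'_def)
    have cw: "cnj (w0 j) = A$$(t,j) / complex_of_real (sqrt a)" if "j < d" for j
    proof -
      have "cnj (A$$(j,t)) = A$$(t,j)" using hA that t unfolding herm_def by blast
      then show ?thesis by (simp add: w0_def)
    qed
    have w0w0: "w0 i * cnj (w0 j) = A$$(i,t) * A$$(t,j) / complex_of_real a" if "i<d" "j<d" for i j
    proof -
      have "sqrt a * sqrt a = a" using apos by simp
      then have ss: "complex_of_real (sqrt a) * complex_of_real (sqrt a) = complex_of_real a"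
        by (metis of_real_mult)
      have "w0 i * cnj (w0 j) = (A$$(i,t) / complex_of_real (sqrt a)) * (A$$(t,j) / complex_of_real (sqrt a))"
        unfolding cw[OF that(2)] by (simp only: w0_def)
      also have "\<dots> = A$$(i,t) * A$$(t,j) / (complex_of_real (sqrt a) * complex_of_real (sqrt a))"
        by (rule times_divide_times_eq)
      finally show ?thesis unfolding ss .
    qed
    have psd': "psd d A'"
      unfolding psd_iff
    proof (intro conjI allI)
      show "A' \<in> carrier_mat d d" by (simp add: A'_def)
      show "herm d A'" unfolding herm_def
      proof (intro allI impI)
        fix i j assume ij: "i < d" "j < d"
        have "cnj (A$$(j,i)) = A$$(i,j)" using hA ij unfolding herm_def by blast
        then show "cnj (A'$$(j,i)) = A'$$(i,j)" using A'e ij by (simp add: mult.commute)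
      qed
      fix f
      let ?b = "\<Sum>j<d. A$$(t,j) * f j"
      define c where "c = (\<Sum>j<d. cnj (w0 j) * f j)"
      have c: "c = ?b / complex_of_real (sqrt a)"
      proof -
        have "c = (\<Sum>j<d. A$$(t,j) * f j / complex_of_real (sqrt a))"
          unfolding c_def by (intro sum.cong refl) (simp add: cw)
        then show ?thesis by (simp add: sum_divide_distrib)
      qed
      have "qf d A' f = (\<Sum>i<d. \<Sum>j<d. cnj (f i) * A$$(i,j) * f j - (cnj (f i) * w0 i) * (cnj (w0 j) * f j))"
        unfolding qf_def by (intro sum.cong refl) (simp add: A'e algebra_simps)
      also have "\<dots> = qf d A f - (\<Sum>i<d. cnj (f i) * w0 i) * c"
        unfolding qf_def c_def by (simp add: sum_subtractf sum_product)
      also have "(\<Sum>i<d. cnj (f i) * w0 i) = cnj c"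
        unfolding c_def by (simp add: mult.commute)
      finally have "qf d A' f = qf d A f - cnj c * c" .
      moreover have "Re (cnj c * c) = (cmod ?b)^2 / a"
      proof -
        have "Re (cnj c * c) = (cmod c)^2" by (simp add: cmod_def power2_eq_square algebra_simps)
        also have "\<dots> = (cmod ?b)^2 / a" using apos unfolding c by (simp add: norm_divide power_divide)
        finally show ?thesis .
      qed
      moreover have "(cmod ?b)^2 / a \<le> Re (qf d A f)" using psd_cs[OF p t, of f] apos a_def by simp
      ultimately show "0 \<le> Re (qf d A' f)" by simp
    qed
    have z': "\<forall>i<d. \<forall>j<d. (i < Suc t \<or> j < Suc t) \<longrightarrow> A'$$(i,j) = 0"
    proof (intro allI impI)
      fix i j assume ij: "i < d" "j < d" "i < Suc t \<or> j < Suc t"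
      have e: "A'$$(i,j) = A$$(i,j) - A$$(i,t) * A$$(t,j) / complex_of_real a"
        using A'e[OF ij(1,2)] w0w0[OF ij(1,2)] by simp
      consider "i < t" | "j < t" | "i = t" | "j = t" using ij(3) by linarith
      then show "A'$$(i,j) = 0"
      proof cases
        case 1
        then have "A$$(i,j) = 0" "A$$(i,t) = 0" using z ij t by blast+
        then show ?thesis using e by simp
      next
        case 2
        then have "A$$(i,j) = 0" "A$$(t,j) = 0" using z ij t by blast+
        then show ?thesis using e by simp
      next
        case 3 then show ?thesis using e at apos by simp
      next
        case 4 then show ?thesis using e at apos by simp
      qed
    qed
    have "\<exists>(N::nat) w. \<forall>i<d. \<forall>j<d. A'$$(i,j) = (\<Sum>r<N. w r i * cnj (w r j))"
    proof -
      show ?thesis by (rule Suc.hyps(1)[OF _ _ psd' z']) (use k t in simp_all)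
    qed
    then obtain N :: nat and w where Nw: "\<forall>i<d. \<forall>j<d. A'$$(i,j) = (\<Sum>r<N. w r i * cnj (w r j))"
      by blast
    have "\<forall>i<d. \<forall>j<d. A$$(i,j) = (\<Sum>r<Suc N. (w(N := w0)) r i * cnj ((w(N := w0)) r j))"
    proof (intro allI impI)
      fix i j assume ij: "i < d" "j < d"
      have "(\<Sum>r<Suc N. (w(N := w0)) r i * cnj ((w(N := w0)) r j)) = (\<Sum>r<N. w r i * cnj (w r j)) + w0 i * cnj (w0 j)"
        by simp
      also have "\<dots> = A'$$(i,j) + w0 i * cnj (w0 j)" using Nw ij by simp
      also have "\<dots> = A$$(i,j)" using A'e[OF ij] by simp
      finally show "A$$(i,j) = (\<Sum>r<Suc N. (w(N := w0)) r i * cnj ((w(N := w0)) r j))" by simp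
    qed
    then show ?thesis by blast
  qed
qed

lemma psd_decomp:
  "psd d A \<Longrightarrow> \<exists>(N::nat) w. \<forall>i<d. \<forall>j<d. A$$(i,j) = (\<Sum>r<N. w r i * cnj (w r j))"
  using psd_decomp_aux[of 0 d A] by simp

lemma qf_split:
  "qf (k*m) R u = (\<Sum>a<k. \<Sum>j<m. \<Sum>b<k. \<Sum>i<m. cnj (u (a*m+j)) * R$$(a*m+j, b*m+i) * u (b*m+i))"
  unfolding qf_def by (simp add: sum_split_mult)

lemma swap3: "(\<Sum>i\<in>I. \<Sum>j\<in>J. \<Sum>r\<in>K. f r j i) = (\<Sum>r\<in>K. \<Sum>j\<in>J. \<Sum>i\<in>I. (f r j i::'a::comm_monoid_add))"
proof -
  have "(\<Sum>i\<in>I. \<Sum>j\<in>J. \<Sum>r\<in>K. f r j i) = (\<Sum>i\<in>I. \<Sum>r\<in>K. \<Sum>j\<in>J. f r j i)"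
    by (intro sum.cong refl sum.swap)
  also have "\<dots> = (\<Sum>r\<in>K. \<Sum>i\<in>I. \<Sum>j\<in>J. f r j i)" by (rule sum.swap)
  also have "\<dots> = (\<Sum>r\<in>K. \<Sum>j\<in>J. \<Sum>i\<in>I. f r j i)" by (intro sum.cong refl sum.swap)
  finally show ?thesis .
qed

lemma swap5: "(\<Sum>a\<in>A. \<Sum>b\<in>B. \<Sum>r\<in>K. \<Sum>j\<in>J. g r a j b) = (\<Sum>r\<in>K. \<Sum>a\<in>A. \<Sum>j\<in>J. \<Sum>b\<in>B. (g r a j b::'a::comm_monoid_add))"
proof -
  have "(\<Sum>a\<in>A. \<Sum>b\<in>B. \<Sum>r\<in>K. \<Sum>j\<in>J. g r a j b) = (\<Sum>a\<in>A. \<Sum>r\<in>K. \<Sum>b\<in>B. \<Sum>j\<in>J. g r a j b)"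
    by (intro sum.cong refl sum.swap)
  also have "\<dots> = (\<Sum>r\<in>K. \<Sum>a\<in>A. \<Sum>b\<in>B. \<Sum>j\<in>J. g r a j b)" by (rule sum.swap)
  also have "\<dots> = (\<Sum>r\<in>K. \<Sum>a\<in>A. \<Sum>j\<in>J. \<Sum>b\<in>B. g r a j b)" by (intro sum.cong refl sum.swap)
  finally show ?thesis .
qed

lemma psd_partial_trace:
  assumes P: "psd m P" and R: "psd (k*m) R"
  shows "psd k (mat k k (\<lambda>(a,b). \<Sum>i<m. \<Sum>j<m. P$$(i,j) * R$$(a*m+j, b*m+i)))"
    (is "psd k ?S")
proof -
  obtain N :: nat and w where w: "\<forall>i<m. \<forall>j<m. P$$(i,j) = (\<Sum>r<N. w r i * cnj (w r j))"
    using psd_decomp[OF P] by blast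
  have hP: "herm m P" and hR: "herm (k*m) R" using P R psd_herm by auto
  have Se: "?S $$ (a,b) = (\<Sum>i<m. \<Sum>j<m. P$$(i,j) * R$$(a*m+j, b*m+i))" if "a<k" "b<k" for a b
    using that by simp
  have "herm k ?S" unfolding herm_def
  proof (intro allI impI)
    fix a b assume ab: "a < k" "b < k"
    have "cnj (?S $$ (b,a)) = (\<Sum>i<m. \<Sum>j<m. cnj (P$$(i,j)) * cnj (R$$(b*m+j, a*m+i)))"
      using ab by (simp add: Se)
    also have "\<dots> = (\<Sum>i<m. \<Sum>j<m. P$$(j,i) * R$$(a*m+i, b*m+j))"
    proof (intro sum.cong refl)
      fix i j assume ij: "i \<in> {..<m}" "j \<in> {..<m}"
      have "cnj (P$$(i,j)) = P$$(j,i)" using hP ij unfolding herm_def by blast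
      moreover have "b*m+j < k*m" "a*m+i < k*m" using ij ab adm_lt by auto
      then have "cnj (R$$(b*m+j, a*m+i)) = R$$(a*m+i, b*m+j)"
        using hR unfolding herm_def by blast
      ultimately show "cnj (P$$(i,j)) * cnj (R$$(b*m+j, a*m+i)) = P$$(j,i) * R$$(a*m+i, b*m+j)" by simp
    qed
    also have "\<dots> = (\<Sum>i<m. \<Sum>j<m. P$$(i,j) * R$$(a*m+j, b*m+i))" by (rule sum.swap)
    also have "\<dots> = ?S $$ (a,b)" using ab by (simp only: Se)
    finally show "cnj (?S $$ (b,a)) = ?S $$ (a,b)" .
  qed
  moreover have "0 \<le> Re (qf k ?S v)" for v
  proof -
    define u where "u r x = v (x div m) * w r (x mod m)" for r x
    let ?F = "\<lambda>r a j b i. cnj (v a * w r j) * R$$(a*m+j, b*m+i) * (v b * w r i)"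
    have "qf k ?S v = (\<Sum>a<k. \<Sum>b<k. \<Sum>r<N. \<Sum>j<m. \<Sum>i<m. ?F r a j b i)"
      unfolding qf_def
    proof (intro sum.cong refl)
      fix a b assume ab: "a \<in> {..<k}" "b \<in> {..<k}"
      have "cnj (v a) * ?S $$ (a,b) * v b = (\<Sum>i<m. \<Sum>j<m. cnj (v a) * (P$$(i,j) * R$$(a*m+j, b*m+i)) * v b)"
        using ab by (simp add: Se sum_distrib_left sum_distrib_right)
      also have "\<dots> = (\<Sum>i<m. \<Sum>j<m. \<Sum>r<N. ?F r a j b i)"
      proof (intro sum.cong refl)
        fix i j assume ij: "i \<in> {..<m}" "j \<in> {..<m}"
        have "P$$(i,j) = (\<Sum>r<N. w r i * cnj (w r j))" using w ij by blast
        then have "cnj (v a) * (P$$(i,j) * R$$(a*m+j, b*m+i)) * v b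
           = (\<Sum>r<N. cnj (v a) * ((w r i * cnj (w r j)) * R$$(a*m+j, b*m+i)) * v b)"
          by (simp add: sum_distrib_left sum_distrib_right)
        also have "\<dots> = (\<Sum>r<N. ?F r a j b i)"
          by (intro sum.cong refl) (simp add: mult_ac)
        finally show "cnj (v a) * (P$$(i,j) * R$$(a*m+j, b*m+i)) * v b = (\<Sum>r<N. ?F r a j b i)" .
      qed
      also have "\<dots> = (\<Sum>r<N. \<Sum>j<m. \<Sum>i<m. ?F r a j b i)"
        by (rule swap3)
      finally show "cnj (v a) * ?S $$ (a,b) * v b = (\<Sum>r<N. \<Sum>j<m. \<Sum>i<m. ?F r a j b i)" .
    qed
    also have "\<dots> = (\<Sum>r<N. \<Sum>a<k. \<Sum>j<m. \<Sum>b<k. \<Sum>i<m. ?F r a j b i)"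
      by (rule swap5)
    also have "\<dots> = (\<Sum>r<N. qf (k*m) R (u r))"
      unfolding qf_split u_def by (intro sum.cong refl) simp
    finally have "Re (qf k ?S v) = (\<Sum>r<N. Re (qf (k*m) R (u r)))" by simp
    also have "\<dots> \<ge> 0" using psd_qf[OF R] by (intro sum_nonneg) auto
    finally show ?thesis .
  qed
  ultimately show ?thesis unfolding psd_iff by simp
qed

lemma msum_prop:
  assumes "\<forall>l<K. f l \<in> carrier_mat d d"
  shows "msum d f K \<in> carrier_mat d d \<and> (\<forall>i<d. \<forall>j<d. msum d f K $$ (i,j) = (\<Sum>l<K. f l $$ (i,j)))"
  using assms
proof (induction K)
  case 0 then show ?case by simp
next
  case (Suc K)
  then have IH: "msum d f K \<in> carrier_mat d d" "\<forall>i<d. \<forall>j<d. msum d f K $$ (i,j) = (\<Sum>l<K. f l $$ (i,j))"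
    by auto
  have fK: "f K \<in> carrier_mat d d" using Suc.prems by simp
  show ?case using IH fK by auto
qed

lemma msum_carrier: "\<forall>l<K. f l \<in> carrier_mat d d \<Longrightarrow> msum d f K \<in> carrier_mat d d"
  using msum_prop by blast
lemma msum_entry: "\<forall>l<K. f l \<in> carrier_mat d d \<Longrightarrow> i < d \<Longrightarrow> j < d \<Longrightarrow> msum d f K $$ (i,j) = (\<Sum>l<K. f l $$ (i,j))"
  using msum_prop by blast

lemma blk_carrier[simp]: "blk d X a b \<in> carrier_mat d d"
  by (simp add: blk_def)
lemma blk_dims[simp]: "dim_row (blk d X a b) = d" "dim_col (blk d X a b) = d"
  by (simp_all add: blk_def)
lemma blk_entry[simp]: "i < d \<Longrightarrow> j < d \<Longrightarrow> blk d X a b $$ (i,j) = X $$ (a*d+i, b*d+j)"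
  by (simp add: blk_def)

lemma blockmap_carrier[simp]: "blockmap r m n \<psi> V \<in> carrier_mat (r*n) (r*n)"
  by (simp add: blockmap_def)
lemma blockmap_entry:
  "x < r*n \<Longrightarrow> y < r*n \<Longrightarrow> blockmap r m n \<psi> V $$ (x,y) = \<psi> (blk m V (x div n) (y div n)) $$ (x mod n, y mod n)"
  by (simp add: blockmap_def)
lemma blockmap_entry':
  "a < r \<Longrightarrow> b < r \<Longrightarrow> s < n \<Longrightarrow> t < n \<Longrightarrow> blockmap r m n \<psi> V $$ (a*n+s, b*n+t) = \<psi> (blk m V a b) $$ (s, t)"
  using blockmap_entry[of "a*n+s" r n "b*n+t"] adm_lt by simp

lemma blk_blockmap:
  assumes "a < r" "b < r" "\<psi> (blk m V a b) \<in> carrier_mat n n"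
  shows "blk n (blockmap r m n \<psi> V) a b = \<psi> (blk m V a b)"
  by (rule eq_matI) (use assms blockmap_entry' in auto)

lemma kron_carrier: "A \<in> carrier_mat p p \<Longrightarrow> B \<in> carrier_mat q q \<Longrightarrow> kron A B \<in> carrier_mat (p*q) (p*q)"
  by (simp add: kron_def)
lemma kron_entry: "A \<in> carrier_mat p p \<Longrightarrow> B \<in> carrier_mat q q \<Longrightarrow> i < p*q \<Longrightarrow> j < p*q \<Longrightarrow>
   kron A B $$ (i,j) = A $$ (i div q, j div q) * B $$ (i mod q, j mod q)"
  by (simp add: kron_def)
lemma kron_entry': "A \<in> carrier_mat p p \<Longrightarrow> B \<in> carrier_mat q q \<Longrightarrow> a < p \<Longrightarrow> b < p \<Longrightarrow> i < q \<Longrightarrow> j < q \<Longrightarrow>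
   kron A B $$ (a*q+i, b*q+j) = A $$ (a, b) * B $$ (i, j)"
  using kron_entry[of A p B q "a*q+i" "b*q+j"] adm_lt by simp

lemma sum_delta_if: "(a::nat) < k \<Longrightarrow> (\<Sum>a'<k. (if a' = a then g a' else 0)) = (g a :: complex)"
  by simp

lemma kron1_cadj_mult_entry:
  assumes U: "U \<in> carrier_mat d d" and X: "X \<in> carrier_mat (k*d) (k*d)"
    and ab: "a < k" "b < k" and ij: "i < d" "j < d"
  shows "(cadj (kron (1\<^sub>m k) U) * X) $$ (a*d+i, b*d+j) = (\<Sum>p<d. cnj (U$$(p,i)) * X $$ (a*d+p, b*d+j))"
proof -
  have K: "kron (1\<^sub>m k) U \<in> carrier_mat (k*d) (k*d)" using kron_carrier[OF _ U] by simp
  have "(cadj (kron (1\<^sub>m k) U) * X) $$ (a*d+i, b*d+j) = (\<Sum>q<k*d. cnj (kron (1\<^sub>m k) U $$ (q, a*d+i)) * X $$ (q, b*d+j))"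
    using cadj_mult_entry[OF K X] adm_lt ab ij by simp
  also have "\<dots> = (\<Sum>a'<k. \<Sum>p<d. cnj (kron (1\<^sub>m k) U $$ (a'*d+p, a*d+i)) * X $$ (a'*d+p, b*d+j))"
    by (rule sum_split_mult)
  also have "\<dots> = (\<Sum>a'<k. if a' = a then (\<Sum>p<d. cnj (U$$(p,i)) * X $$ (a'*d+p, b*d+j)) else 0)"
  proof (intro sum.cong refl)
    fix a' assume a': "a' \<in> {..<k}"
    have "cnj (kron (1\<^sub>m k) U $$ (a'*d+p, a*d+i)) = (if a' = a then cnj (U$$(p,i)) else 0)" if "p < d" for p
      using kron_entry'[OF _ U, of "1\<^sub>m k" k a' a p i] a' ab ij that by simp
    then show "(\<Sum>p<d. cnj (kron (1\<^sub>m k) U $$ (a'*d+p, a*d+i)) * X $$ (a'*d+p, b*d+j))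
      = (if a' = a then (\<Sum>p<d. cnj (U$$(p,i)) * X $$ (a'*d+p, b*d+j)) else 0)"
      by (auto intro!: sum.cong)
  qed
  also have "\<dots> = (\<Sum>p<d. cnj (U$$(p,i)) * X $$ (a*d+p, b*d+j))"
    by (rule sum_delta_if[OF ab(1)])
  finally show ?thesis .
qed

lemma blk_kron1_cadj_mult:
  assumes U: "U \<in> carrier_mat d d" and X: "X \<in> carrier_mat (k*d) (k*d)" and ab: "a < k" "b < k"
  shows "blk d (cadj (kron (1\<^sub>m k) U) * X) a b = cadj U * blk d X a b"
proof (rule eq_matI)
  fix i j assume ij: "i < dim_row (cadj U * blk d X a b)" "j < dim_col (cadj U * blk d X a b)"
  then have ij': "i < d" "j < d" using U by auto
  show "blk d (cadj (kron (1\<^sub>m k) U) * X) a b $$ (i, j) = (cadj U * blk d X a b) $$ (i, j)"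
    using kron1_cadj_mult_entry[OF U X ab ij'] cadj_mult_entry[OF U blk_carrier ij'] ij' by simp
qed (use U in auto)

lemma mtrace_kron1:
  assumes U: "U \<in> carrier_mat d d" and X: "X \<in> carrier_mat (k*d) (k*d)"
  shows "mtrace (cadj (kron (1\<^sub>m k) U) * X) = (\<Sum>a<k. mtrace (cadj U * blk d X a a))"
proof -
  have K: "kron (1\<^sub>m k) U \<in> carrier_mat (k*d) (k*d)" using kron_carrier[OF _ U] by simp
  have "mtrace (cadj (kron (1\<^sub>m k) U) * X) = (\<Sum>x<k*d. (cadj (kron (1\<^sub>m k) U) * X) $$ (x,x))"
    by (rule mtrace_sum) (use K X in auto)
  also have "\<dots> = (\<Sum>a<k. \<Sum>i<d. (cadj (kron (1\<^sub>m k) U) * X) $$ (a*d+i,a*d+i))"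
    by (rule sum_split_mult)
  also have "\<dots> = (\<Sum>a<k. \<Sum>i<d. (cadj U * blk d X a a) $$ (i,i))"
  proof (intro sum.cong refl)
    fix a i assume "a \<in> {..<k}" "i \<in> {..<d}"
    then show "(cadj (kron (1\<^sub>m k) U) * X) $$ (a*d+i,a*d+i) = (cadj U * blk d X a a) $$ (i,i)"
      using blk_kron1_cadj_mult[OF U X, of a a] blk_entry[of i d i] by (metis blk_entry lessThan_iff)
  qed
  also have "\<dots> = (\<Sum>a<k. mtrace (cadj U * blk d X a a))"
  proof (intro sum.cong refl)
    fix a assume "a \<in> {..<k}"
    have "cadj U * blk d X a a \<in> carrier_mat d d" using U by auto
    then show "(\<Sum>i<d. (cadj U * blk d X a a) $$ (i,i)) = mtrace (cadj U * blk d X a a)"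
      by (simp add: mtrace_sum)
  qed
  finally show ?thesis .
qed

lemma lin_carrier: "lin_map m n \<psi> \<Longrightarrow> A \<in> carrier_mat m m \<Longrightarrow> \<psi> A \<in> carrier_mat n n"
  by (simp add: lin_map_def)
lemma lin_add: "lin_map m n \<psi> \<Longrightarrow> A \<in> carrier_mat m m \<Longrightarrow> B \<in> carrier_mat m m \<Longrightarrow> \<psi> (A + B) = \<psi> A + \<psi> B"
  by (simp add: lin_map_def)
lemma lin_smult: "lin_map m n \<psi> \<Longrightarrow> A \<in> carrier_mat m m \<Longrightarrow> \<psi> (c \<cdot>\<^sub>m A) = c \<cdot>\<^sub>m \<psi> A"
  by (simp add: lin_map_def)

lemma lin_zero:
  assumes L: "lin_map m n \<psi>"
  shows "\<psi> (0\<^sub>m m m) = 0\<^sub>m n n"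
proof -
  have "0\<^sub>m m m = (0::complex) \<cdot>\<^sub>m 1\<^sub>m m" by (rule eq_matI) auto
  then have "\<psi> (0\<^sub>m m m) = 0 \<cdot>\<^sub>m \<psi> (1\<^sub>m m)" using lin_smult[OF L, of "1\<^sub>m m" 0] by simp
  also have "\<dots> = 0\<^sub>m n n" using lin_carrier[OF L, of "1\<^sub>m m"] by (intro eq_matI) auto
  finally show ?thesis .
qed

lemma lin_msum:
  assumes L: "lin_map m n \<psi>" and f: "\<forall>l<K. f l \<in> carrier_mat m m"
  shows "\<psi> (msum m f K) = msum n (\<lambda>l. \<psi> (f l)) K"
  using f
proof (induction K)
  case 0 then show ?case using lin_zero[OF L] by simp
next
  case (Suc K)
  then have "\<psi> (msum m f K) = msum n (\<lambda>l. \<psi> (f l)) K" by simp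
  moreover have "msum m f K \<in> carrier_mat m m" using Suc.prems msum_carrier by simp
  moreover have "f K \<in> carrier_mat m m" using Suc.prems by simp
  ultimately show ?case using lin_add[OF L] by simp
qed

lemma psd_trace:
  assumes p: "psd d A"
  shows "mtrace A = complex_of_real (Re (mtrace A))" "0 \<le> Re (mtrace A)"
proof -
  have A: "A \<in> carrier_mat d d" using psd_carrier[OF p] .
  have "Im (mtrace A) = (\<Sum>i<d. Im (A$$(i,i)))" using A by (simp add: mtrace_sum Im_sum)
  also have "\<dots> = 0" using psd_diag(1)[OF p] by simp
  finally show "mtrace A = complex_of_real (Re (mtrace A))" by (simp add: complex_eq_iff)
  have "Re (mtrace A) = (\<Sum>i<d. Re (A$$(i,i)))" using A by (simp add: mtrace_sum Re_sum)
  also have "\<dots> \<ge> 0" using psd_diag(2)[OF p] by (intro sum_nonneg) auto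
  finally show "0 \<le> Re (mtrace A)" .
qed

lemma psd_trace_zero:
  assumes p: "psd d A" and z: "mtrace A = 0" and ij: "i < d" "j < d"
  shows "A $$ (i,j) = 0"
proof -
  have A: "A \<in> carrier_mat d d" using psd_carrier[OF p] .
  have "(\<Sum>i<d. Re (A$$(i,i))) = 0" using z A by (simp add: mtrace_sum flip: Re_sum)
  then have "\<forall>i\<in>{..<d}. Re (A$$(i,i)) = 0"
    using sum_nonneg_eq_0_iff[of "{..<d}" "\<lambda>i. Re (A$$(i,i))"] psd_diag(2)[OF p] by auto
  then have "A$$(i,i) = 0" using psd_diag(1)[OF p ij(1)] ij by (simp add: complex_eq_iff)
  then show ?thesis using psd_zero_row[OF p ij(1) _ ij(2)] by simp
qed

lemma psd_smult:
  assumes p: "psd d A" and c: "0 \<le> c"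
  shows "psd d (complex_of_real c \<cdot>\<^sub>m A)"
  unfolding psd_iff
proof (intro conjI allI)
  have A: "A \<in> carrier_mat d d" using psd_carrier[OF p] .
  then show "complex_of_real c \<cdot>\<^sub>m A \<in> carrier_mat d d" by simp
  show "herm d (complex_of_real c \<cdot>\<^sub>m A)" using psd_herm[OF p] A unfolding herm_def by simp
  fix f
  have "qf d (complex_of_real c \<cdot>\<^sub>m A) f = complex_of_real c * qf d A f"
    using A unfolding qf_def by (simp add: sum_distrib_left mult_ac)
  then show "0 \<le> Re (qf d (complex_of_real c \<cdot>\<^sub>m A) f)" using psd_qf[OF p, of f] c by simp
qed

lemma psd_transpose:
  assumes p: "psd d A"
  shows "psd d (transpose_mat A)"
  unfolding psd_iff
proof (intro conjI allI)
  have A: "A \<in> carrier_mat d d" using psd_carrier[OF p] .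
  then show "transpose_mat A \<in> carrier_mat d d" by simp
  have h: "herm d A" using psd_herm[OF p] .
  then show "herm d (transpose_mat A)" using A unfolding herm_def by simp
  fix f
  have "qf d (transpose_mat A) f = cnj (qf d A (\<lambda>i. cnj (f i)))"
    unfolding qf_def
  proof (simp only: cnj_sum, intro sum.cong refl)
    fix i j assume ij: "i \<in> {..<d}" "j \<in> {..<d}"
    have "cnj (A$$(i,j)) = A$$(j,i)" using h ij unfolding herm_def by auto
    then show "cnj (f i) * transpose_mat A $$ (i, j) * f j = cnj (cnj (cnj (f i)) * A $$ (i, j) * cnj (f j))"
      using A ij by simp
  qed
  then show "0 \<le> Re (qf d (transpose_mat A) f)" using psd_qf[OF p] by simp
qed

lemma mtrace_kron:
  assumes A: "A \<in> carrier_mat k k" and B: "B \<in> carrier_mat n n" and U: "U \<in> carrier_mat n n"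
  shows "mtrace (cadj (kron (1\<^sub>m k) U) * kron A B) = mtrace A * mtrace (cadj U * B)"
proof -
  have KB: "kron A B \<in> carrier_mat (k*n) (k*n)" using kron_carrier[OF A B] .
  have "mtrace (cadj (kron (1\<^sub>m k) U) * kron A B) = (\<Sum>a<k. mtrace (cadj U * blk n (kron A B) a a))"
    by (rule mtrace_kron1[OF U KB])
  also have "\<dots> = (\<Sum>a<k. A$$(a,a) * mtrace (cadj U * B))"
  proof (intro sum.cong refl)
    fix a assume a: "a \<in> {..<k}"
    have "mtrace (cadj U * blk n (kron A B) a a) = (\<Sum>i<n. (cadj U * blk n (kron A B) a a) $$ (i,i))"
      using U by (intro mtrace_sum) auto
    also have "\<dots> = (\<Sum>i<n. \<Sum>p<n. cnj (U$$(p,i)) * (A$$(a,a) * B$$(p,i)))"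
    proof (intro sum.cong refl)
      fix i assume i: "i \<in> {..<n}"
      have "(cadj U * blk n (kron A B) a a) $$ (i,i) = (\<Sum>p<n. cnj (U$$(p,i)) * blk n (kron A B) a a $$ (p,i))"
        using i by (intro cadj_mult_entry[OF U blk_carrier]) auto
      also have "\<dots> = (\<Sum>p<n. cnj (U $$ (p, i)) * (A $$ (a, a) * B $$ (p, i)))"
        using i a by (intro sum.cong refl) (simp add: kron_entry'[OF A B])
      finally show "(cadj U * blk n (kron A B) a a) $$ (i,i) = (\<Sum>p<n. cnj (U $$ (p, i)) * (A $$ (a, a) * B $$ (p, i)))" .
    qed
    also have "\<dots> = A$$(a,a) * (\<Sum>i<n. \<Sum>p<n. cnj (U$$(p,i)) * B$$(p,i))"
      by (simp add: sum_distrib_left mult_ac)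
    also have "\<dots> = A$$(a,a) * mtrace (cadj U * B)"
    proof -
      have "(\<Sum>i<n. \<Sum>p<n. cnj (U$$(p,i)) * B$$(p,i)) = (\<Sum>i<n. (cadj U * B) $$ (i,i))"
        by (intro sum.cong refl, rule cadj_mult_entry[symmetric, OF U B]) auto
      also have "\<dots> = mtrace (cadj U * B)"
        by (rule mtrace_sum[symmetric]) (use U B in auto)
      finally show ?thesis by simp
    qed
    finally show "mtrace (cadj U * blk n (kron A B) a a) = A$$(a,a) * mtrace (cadj U * B)" .
  qed
  also have "\<dots> = mtrace A * mtrace (cadj U * B)"
    using A by (simp add: mtrace_sum sum_distrib_right)
  finally show ?thesis .
qed

lemma psd_rank1:
  assumes A: "A \<in> carrier_mat d d" and u: "\<forall>i<d. \<forall>j<d. A$$(i,j) = (\<Sum>r<(N::nat). u r i * cnj (u r j))"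
  shows "psd d A"
  unfolding psd_iff
proof (intro conjI allI)
  show "A \<in> carrier_mat d d" by (rule A)
  show "herm d A" unfolding herm_def
  proof (intro allI impI)
    fix i j assume "i < d" "j < d"
    then show "cnj (A$$(j,i)) = A$$(i,j)" using u by (simp add: mult.commute)
  qed
  fix f
  define c where "c r = (\<Sum>j<d. cnj (u r j) * f j)" for r
  have "qf d A f = (\<Sum>i<d. \<Sum>j<d. \<Sum>r<N. (cnj (f i) * u r i) * (cnj (u r j) * f j))"
    unfolding qf_def
  proof (intro sum.cong refl)
    fix i j assume "i \<in> {..<d}" "j \<in> {..<d}"
    then show "cnj (f i) * A $$ (i, j) * f j = (\<Sum>r<N. (cnj (f i) * u r i) * (cnj (u r j) * f j))"
      using u by (simp add: sum_distrib_left sum_distrib_right mult_ac)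
  qed
  also have "\<dots> = (\<Sum>r<N. \<Sum>j<d. \<Sum>i<d. (cnj (f i) * u r i) * (cnj (u r j) * f j))"
    by (rule swap3)
  also have "\<dots> = (\<Sum>r<N. cnj (c r) * c r)"
  proof (intro sum.cong refl)
    fix r
    have "(\<Sum>j<d. \<Sum>i<d. (cnj (f i) * u r i) * (cnj (u r j) * f j)) = (\<Sum>i<d. \<Sum>j<d. (cnj (f i) * u r i) * (cnj (u r j) * f j))"
      by (rule sum.swap)
    also have "\<dots> = (\<Sum>i<d. cnj (f i) * u r i) * c r"
      unfolding c_def by (rule sum_product[symmetric])
    also have "(\<Sum>i<d. cnj (f i) * u r i) = cnj (c r)"
      unfolding c_def by (simp add: mult.commute)
    finally show "(\<Sum>j<d. \<Sum>i<d. (cnj (f i) * u r i) * (cnj (u r j) * f j)) = cnj (c r) * c r" .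
  qed
  finally have "Re (qf d A f) = (\<Sum>r<N. Re (cnj (c r) * c r))" by simp
  also have "\<dots> \<ge> 0" by (intro sum_nonneg) simp
  finally show "0 \<le> Re (qf d A f)" .
qed

lemma psd_kron:
  assumes A: "psd p A" and B: "psd q B"
  shows "psd (p*q) (kron A B)"
proof -
  obtain N1 :: nat and w where w: "\<forall>i<p. \<forall>j<p. A$$(i,j) = (\<Sum>r<N1. w r i * cnj (w r j))"
    using psd_decomp[OF A] by blast
  obtain N2 :: nat and z where z: "\<forall>i<q. \<forall>j<q. B$$(i,j) = (\<Sum>r<N2. z r i * cnj (z r j))"
    using psd_decomp[OF B] by blast
  have Ac: "A \<in> carrier_mat p p" and Bc: "B \<in> carrier_mat q q" using A B psd_carrier by auto
  define u where "u r x = w (r div N2) (x div q) * z (r mod N2) (x mod q)" for r x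
  show ?thesis
  proof (rule psd_rank1[where N="N1*N2" and u=u])
    show "kron A B \<in> carrier_mat (p*q) (p*q)" by (rule kron_carrier[OF Ac Bc])
    show "\<forall>i<p*q. \<forall>j<p*q. kron A B $$ (i,j) = (\<Sum>r<N1*N2. u r i * cnj (u r j))"
    proof (intro allI impI)
      fix i j assume ij: "i < p*q" "j < p*q"
      have d: "i div q < p" "i mod q < q" "j div q < p" "j mod q < q" using divmod_lt ij by auto
      have "kron A B $$ (i,j) = A$$(i div q, j div q) * B$$(i mod q, j mod q)"
        by (rule kron_entry[OF Ac Bc ij])
      also have "\<dots> = (\<Sum>r<N1. w r (i div q) * cnj (w r (j div q))) * (\<Sum>s<N2. z s (i mod q) * cnj (z s (j mod q)))"
        using w z d by simp
      also have "\<dots> = (\<Sum>r<N1. \<Sum>s<N2. u (r*N2+s) i * cnj (u (r*N2+s) j))"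
        unfolding u_def by (simp add: sum_product mult_ac)
      also have "\<dots> = (\<Sum>r<N1*N2. u r i * cnj (u r j))"
        by (rule sum_split_mult[symmetric])
      finally show "kron A B $$ (i,j) = (\<Sum>r<N1*N2. u r i * cnj (u r j))" .
    qed
  qed
qed

lemma psd_one: "psd d (1\<^sub>m d)"
  by (rule psd_rank1[where N=d and u="\<lambda>r i. if r = i then 1 else 0"]) (auto simp: sum_delta_l)

lemma cadj_one[simp]: "cadj (1\<^sub>m k) = 1\<^sub>m k"
  by (rule eq_matI) auto

lemma unitaryD:
  assumes "unitary_mat d U"
  shows "U \<in> carrier_mat d d" "cadj U * U = 1\<^sub>m d" "U * cadj U = 1\<^sub>m d"
  using assms by (auto simp: unitary_mat_def)

lemma mtrace_smult: "A \<in> carrier_mat d d \<Longrightarrow> mtrace (c \<cdot>\<^sub>m A) = c * mtrace A"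
  by (simp add: mtrace_sum[of "c \<cdot>\<^sub>m A" d] mtrace_sum[of A d] sum_distrib_left)

lemma mtrace_one: "mtrace (1\<^sub>m d) = of_nat d"
  by (simp add: mtrace_def)

lemma mtrace_mult:
  assumes "P \<in> carrier_mat d d" "Q \<in> carrier_mat d d"
  shows "mtrace (P * Q) = (\<Sum>i<d. \<Sum>j<d. P$$(i,j) * Q$$(j,i))"
proof -
  have "mtrace (P * Q) = (\<Sum>i<d. (P*Q) $$ (i,i))" using assms by (intro mtrace_sum) auto
  also have "\<dots> = (\<Sum>i<d. \<Sum>j<d. P$$(i,j) * Q$$(j,i))"
  proof (rule sum.cong[OF refl])
    fix i assume "i \<in> {..<d}"
    then show "(P*Q) $$ (i,i) = (\<Sum>j<d. P$$(i,j) * Q$$(j,i))" by (intro mult_entry[OF assms]) auto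
  qed
  finally show ?thesis .
qed

lemma unitary_cancel:
  assumes U: "unitary_mat d U" and B: "B \<in> carrier_mat d d"
  shows "U * (cadj U * B) = B"
proof -
  have Uc: "U \<in> carrier_mat d d" using unitaryD[OF U] by simp
  have "U * (cadj U * B) = (U * cadj U) * B" using Uc B by (simp add: assoc_mult_mat[symmetric, of _ d d _ d _ d])
  also have "\<dots> = B" using unitaryD[OF U] B by simp
  finally show ?thesis .
qed

lemma channel_density:
  assumes UA: "unitary_mat m UA" and UB: "unitary_mat n UB" and ch: "U_channel m n UA UB \<psi>"
    and Sc: "S \<in> carrier_mat (k*m) (k*m)" and Sd: "U_density (k*m) (kron (1\<^sub>m k) UA) S"
  shows "U_density (k*n) (kron (1\<^sub>m k) UB) (blockmap k m n \<psi> S)"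
proof -
  have L: "lin_map m n \<psi>" using ch by (simp add: U_channel_def)
  have CP: "U_CP m n UA UB \<psi>" using ch by (simp add: U_channel_def)
  have TP: "\<forall>V\<in>carrier_mat m m. mtrace (cadj UB * \<psi> (UA * V)) = mtrace V" using ch by (simp add: U_channel_def)
  have UAc: "UA \<in> carrier_mat m m" and UBc: "UB \<in> carrier_mat n n" using UA UB unitaryD by auto
  have psdS: "psd (k*m) (cadj (blockdiag k UA) * S)" using Sd by (simp add: U_density_def U_positive_def blockdiag_def)
  have psdT: "psd (k*n) (cadj (kron (1\<^sub>m k) UB) * blockmap k m n \<psi> S)"
    using CP Sc psdS unfolding U_CP_def blockdiag_def by blast
  have "mtrace (cadj (kron (1\<^sub>m k) UB) * blockmap k m n \<psi> S) = (\<Sum>a<k. mtrace (cadj UB * blk n (blockmap k m n \<psi> S) a a))"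
    by (rule mtrace_kron1[OF UBc blockmap_carrier])
  also have "\<dots> = (\<Sum>a<k. mtrace (cadj UA * blk m S a a))"
  proof (intro sum.cong refl)
    fix a assume a: "a \<in> {..<k}"
    have "blk n (blockmap k m n \<psi> S) a a = \<psi> (blk m S a a)"
      using a lin_carrier[OF L blk_carrier] by (intro blk_blockmap) auto
    also have "\<dots> = \<psi> (UA * (cadj UA * blk m S a a))" using unitary_cancel[OF UA blk_carrier] by simp
    finally have "mtrace (cadj UB * blk n (blockmap k m n \<psi> S) a a) = mtrace (cadj UB * \<psi> (UA * (cadj UA * blk m S a a)))"
      by simp
    also have "\<dots> = mtrace (cadj UA * blk m S a a)"
    proof -
      have "cadj UA * blk m S a a \<in> carrier_mat m m" using UAc by auto
      then show ?thesis using TP by blast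
    qed
    finally show "mtrace (cadj UB * blk n (blockmap k m n \<psi> S) a a) = mtrace (cadj UA * blk m S a a)" .
  qed
  also have "\<dots> = mtrace (cadj (kron (1\<^sub>m k) UA) * S)"
    by (rule mtrace_kron1[OF UAc Sc, symmetric])
  also have "\<dots> = 1" using Sd by (simp add: U_density_def)
  finally show ?thesis using psdT unfolding U_density_def U_positive_def by simp
qed

lemma kron_cadj_kron:
  assumes U: "U \<in> carrier_mat n n" and A: "A \<in> carrier_mat k k" and B: "B \<in> carrier_mat n n"
  shows "cadj (kron (1\<^sub>m k) U) * kron A B = kron A (cadj U * B)"
proof (rule eq_matI)
  have KB: "kron A B \<in> carrier_mat (k*n) (k*n)" by (rule kron_carrier[OF A B])
  have K2: "kron A (cadj U * B) \<in> carrier_mat (k*n) (k*n)" by (rule kron_carrier[OF A]) (use U B in auto)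
  have K1: "kron (1\<^sub>m k) U \<in> carrier_mat (k*n) (k*n)" by (rule kron_carrier[OF _ U]) auto
  show "dim_row (cadj (kron (1\<^sub>m k) U) * kron A B) = dim_row (kron A (cadj U * B))"
    "dim_col (cadj (kron (1\<^sub>m k) U) * kron A B) = dim_col (kron A (cadj U * B))"
    using KB K1 K2 by auto
  fix x y assume "x < dim_row (kron A (cadj U * B))" "y < dim_col (kron A (cadj U * B))"
  then have xy: "x < k*n" "y < k*n" using K2 by auto
  define a where "a = x div n"
  define i where "i = x mod n"
  define b where "b = y div n"
  define j where "j = y mod n"
  have d: "a < k" "i < n" "b < k" "j < n" using divmod_lt xy unfolding a_def i_def b_def j_def by auto
  have x: "x = a*n+i" and y: "y = b*n+j" unfolding a_def i_def b_def j_def by simp_all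
  have "(cadj (kron (1\<^sub>m k) U) * kron A B) $$ (a*n+i, b*n+j) = (\<Sum>p<n. cnj (U$$(p,i)) * kron A B $$ (a*n+p, b*n+j))"
    by (rule kron1_cadj_mult_entry[OF U KB d(1) d(3) d(2) d(4)])
  also have "\<dots> = (\<Sum>p<n. cnj (U$$(p,i)) * (A$$(a,b) * B$$(p,j)))"
    using d by (intro sum.cong refl) (simp add: kron_entry'[OF A B])
  also have "\<dots> = A$$(a,b) * (\<Sum>p<n. cnj (U$$(p,i)) * B$$(p,j))"
    by (simp add: sum_distrib_left mult_ac)
  also have "\<dots> = A$$(a,b) * (cadj U * B) $$ (i,j)"
    using cadj_mult_entry[OF U B d(2,4)] by simp
  also have "\<dots> = kron A (cadj U * B) $$ (a*n+i, b*n+j)"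
    using d by (intro kron_entry'[symmetric, OF A]) (use U B in auto)
  finally show "(cadj (kron (1\<^sub>m k) U) * kron A B) $$ (x, y) = kron A (cadj U * B) $$ (x, y)"
    unfolding x y .
qed

lemma swap3b: "(\<Sum>r\<in>K. \<Sum>i\<in>I. \<Sum>j\<in>J. f r i j) = (\<Sum>i\<in>I. \<Sum>j\<in>J. \<Sum>r\<in>K. (f r i j::'a::comm_monoid_add))"
proof -
  have "(\<Sum>r\<in>K. \<Sum>i\<in>I. \<Sum>j\<in>J. f r i j) = (\<Sum>i\<in>I. \<Sum>r\<in>K. \<Sum>j\<in>J. f r i j)" by (rule sum.swap)
  also have "\<dots> = (\<Sum>i\<in>I. \<Sum>j\<in>J. \<Sum>r\<in>K. f r i j)" by (intro sum.cong refl sum.swap)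
  finally show ?thesis .
qed

lemma if_one_mult: "(if P then 1 else 0) * (x::complex) = (if P then x else 0)" by simp

lemma smult_entry: "A \<in> carrier_mat d d \<Longrightarrow> i < d \<Longrightarrow> j < d \<Longrightarrow> (c \<cdot>\<^sub>m A) $$ (i,j) = c * A $$ (i,j)"
  by simp

lemma holevo_EB:
  assumes UA: "unitary_mat m UA" and UB: "unitary_mat n UB" and ch: "U_channel m n UA UB \<psi>"
    and H: "U_Holevo m n UA UB \<psi>"
  shows "U_EB m n UA UB \<psi>"
proof -
  obtain K D F where
    D: "\<forall>l<K. U_density n UB (D l)" and
    F: "\<forall>l<K. F l \<in> carrier_mat m m \<and> psd m (F l * UA)" and
    sumF: "msum m (\<lambda>l. F l * UA) K = 1\<^sub>m m" and
    form: "\<forall>\<rho>\<in>carrier_mat m m. \<psi> \<rho> = msum n (\<lambda>l. mtrace (F l * \<rho>) \<cdot>\<^sub>m D l) K"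
    using H unfolding U_Holevo_def by blast
  have UAc: "UA \<in> carrier_mat m m" and UBc: "UB \<in> carrier_mat n n" using UA UB unitaryD by auto
  have L: "lin_map m n \<psi>" using ch by (simp add: U_channel_def)
  have Dc: "D l \<in> carrier_mat n n" if "l < K" for l using D that by (simp add: U_density_def U_positive_def)
  define P where "P l = F l * UA" for l
  have Pc: "P l \<in> carrier_mat m m" if "l < K" for l using F that UAc by (auto simp: P_def)
  have Ppsd: "psd m (P l)" if "l < K" for l using F that by (simp add: P_def)
  have FP: "F l = P l * cadj UA" if "l < K" for l
  proof -
    have "P l * cadj UA = F l * (UA * cadj UA)" unfolding P_def using F that UAc
      by (simp add: assoc_mult_mat[of _ m m _ m _ m])
    also have "\<dots> = F l"
    proof -
      have "F l \<in> carrier_mat m m" using F that by simp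
      then show ?thesis using unitaryD[OF UA] by simp
    qed
    finally show ?thesis by simp
  qed
  have sumP: "(\<Sum>l<K. P l $$ (i,j)) = (if i = j then 1 else 0)" if "i < m" "j < m" for i j
  proof -
    have "(\<Sum>l<K. P l $$ (i,j)) = msum m P K $$ (i,j)"
      using Pc that by (intro msum_entry[symmetric]) auto
    also have "\<dots> = 1\<^sub>m m $$ (i,j)" using sumF unfolding P_def by simp
    finally show ?thesis using that by simp
  qed
  show ?thesis unfolding U_EB_def
  proof (intro allI ballI impI)
    fix k S assume Sc: "S \<in> carrier_mat (k*m) (k*m)" and Sd: "U_density (k*m) (kron (1\<^sub>m k) UA) S"
    define T where "T = blockmap k m n \<psi> S"
    define R where "R = cadj (kron (1\<^sub>m k) UA) * S"
    have Rc: "R \<in> carrier_mat (k*m) (k*m)" unfolding R_def using Sc kron_carrier[OF _ UAc, of "1\<^sub>m k" k] by auto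
    have Rpsd: "psd (k*m) R" using Sd by (simp add: R_def U_density_def U_positive_def)
    have trR: "mtrace R = 1" using Sd by (simp add: R_def U_density_def)
    have kpos: "k > 0"
    proof (rule ccontr)
      assume "\<not> k > 0"
      then have "k = 0" by simp
      then have "mtrace R = 0" using Rc by (simp add: mtrace_sum)
      then show False using trR by simp
    qed
    have trFS: "mtrace (F l * blk m S a b) = (\<Sum>i<m. \<Sum>j<m. P l $$ (i,j) * R $$ (a*m+j, b*m+i))"
      if l: "l < K" and ab: "a < k" "b < k" for l a b
    proof -
      have "F l * blk m S a b = P l * cadj UA * blk m S a b" using FP[OF l] by simp
      also have "\<dots> = P l * (cadj UA * blk m S a b)"
        using Pc[OF l] UAc by (simp add: assoc_mult_mat[of _ m m _ m _ m])
      also have "cadj UA * blk m S a b = blk m R a b"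
        unfolding R_def by (rule blk_kron1_cadj_mult[OF UAc Sc ab, symmetric])
      finally have "mtrace (F l * blk m S a b) = mtrace (P l * blk m R a b)" by simp
      also have "\<dots> = (\<Sum>i<m. \<Sum>j<m. P l $$ (i,j) * blk m R a b $$ (j,i))"
        by (rule mtrace_mult[OF Pc[OF l] blk_carrier])
      also have "\<dots> = (\<Sum>i<m. \<Sum>j<m. P l $$ (i,j) * R $$ (a*m+j, b*m+i))"
        by (intro sum.cong refl) simp
      finally show ?thesis .
    qed
    define \<sigma> where "\<sigma> l = mat k k (\<lambda>(a,b). \<Sum>i<m. \<Sum>j<m. P l $$ (i,j) * R $$ (a*m+j, b*m+i))" for l
    have \<sigma>c: "\<sigma> l \<in> carrier_mat k k" for l by (simp add: \<sigma>_def)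
    have \<sigma>psd: "psd k (\<sigma> l)" if "l < K" for l
      unfolding \<sigma>_def by (rule psd_partial_trace[OF Ppsd[OF that] Rpsd])
    have \<sigma>e: "\<sigma> l $$ (a,b) = mtrace (F l * blk m S a b)" if "l < K" "a < k" "b < k" for l a b
      using trFS[OF that] that by (simp add: \<sigma>_def)
    define t where "t l = Re (mtrace (\<sigma> l))" for l
    have t_nonneg: "t l \<ge> 0" if "l < K" for l using psd_trace(2)[OF \<sigma>psd[OF that]] by (simp add: t_def)
    have t_eq: "mtrace (\<sigma> l) = complex_of_real (t l)" if "l < K" for l
      using psd_trace(1)[OF \<sigma>psd[OF that]] by (simp add: t_def)
    have sum_tr: "(\<Sum>l<K. mtrace (\<sigma> l)) = 1"
    proof -
      have "(\<Sum>l<K. mtrace (\<sigma> l)) = (\<Sum>l<K. \<Sum>a<k. \<Sum>i<m. \<Sum>j<m. P l $$ (i,j) * R $$ (a*m+j, a*m+i))"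
        by (intro sum.cong refl) (simp add: mtrace_def \<sigma>_def)
      also have "\<dots> = (\<Sum>a<k. \<Sum>i<m. \<Sum>j<m. \<Sum>l<K. P l $$ (i,j) * R $$ (a*m+j, a*m+i))"
      proof -
        have "(\<Sum>l<K. \<Sum>a<k. \<Sum>i<m. \<Sum>j<m. P l $$ (i,j) * R $$ (a*m+j, a*m+i))
          = (\<Sum>a<k. \<Sum>l<K. \<Sum>i<m. \<Sum>j<m. P l $$ (i,j) * R $$ (a*m+j, a*m+i))"
          by (rule sum.swap)
        also have "\<dots> = (\<Sum>a<k. \<Sum>i<m. \<Sum>j<m. \<Sum>l<K. P l $$ (i,j) * R $$ (a*m+j, a*m+i))"
          by (intro sum.cong refl swap3b)
        finally show ?thesis .
      qed
      also have "\<dots> = (\<Sum>a<k. \<Sum>i<m. \<Sum>j<m. (if i = j then 1 else 0) * R $$ (a*m+j, a*m+i))"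
        by (intro sum.cong refl) (simp add: sum_distrib_right[symmetric] sumP)
      also have "\<dots> = (\<Sum>a<k. \<Sum>i<m. R $$ (a*m+i, a*m+i))"
        by (intro sum.cong refl) (simp add: if_one_mult sum.delta)
      also have "\<dots> = mtrace R" using Rc by (simp add: mtrace_sum sum_split_mult)
      finally show ?thesis using trR by simp
    qed
    have sum_t: "(\<Sum>l<K. t l) = 1"
    proof -
      have "(\<Sum>l<K. t l) = Re (\<Sum>l<K. mtrace (\<sigma> l))" by (simp add: t_def Re_sum)
      then show ?thesis using sum_tr by simp
    qed
    define \<rho>1 where "\<rho>1 l = (if t l = 0 then complex_of_real (1 / real k) \<cdot>\<^sub>m 1\<^sub>m k
                           else complex_of_real (1 / t l) \<cdot>\<^sub>m \<sigma> l)" for l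
    have \<rho>1c: "\<rho>1 l \<in> carrier_mat k k" for l by (simp add: \<rho>1_def \<sigma>c)
    have \<rho>1psd: "psd k (\<rho>1 l)" if "l < K" for l
    proof (cases "t l = 0")
      case True
      then have e: "\<rho>1 l = complex_of_real (1 / real k) \<cdot>\<^sub>m 1\<^sub>m k" by (simp add: \<rho>1_def)
      show ?thesis unfolding e by (rule psd_smult[OF psd_one]) simp
    next
      case False
      then have e: "\<rho>1 l = complex_of_real (1 / t l) \<cdot>\<^sub>m \<sigma> l" by (simp add: \<rho>1_def)
      show ?thesis unfolding e by (rule psd_smult[OF \<sigma>psd[OF that]]) (use t_nonneg[OF that] in simp)
    qed
    have \<rho>1tr: "mtrace (\<rho>1 l) = 1" if "l < K" for l
    proof (cases "t l = 0")
      case True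
      then show ?thesis using kpos mtrace_smult[of "1\<^sub>m k" k] by (simp add: \<rho>1_def mtrace_one)
    next
      case False
      then show ?thesis using t_eq[OF that] mtrace_smult[OF \<sigma>c[of l]] by (simp add: \<rho>1_def)
    qed
    have t\<rho>: "complex_of_real (t l) * \<rho>1 l $$ (a,b) = \<sigma> l $$ (a,b)" if "l < K" "a < k" "b < k" for l a b
    proof (cases "t l = 0")
      case True
      then have "\<sigma> l $$ (a,b) = 0" using psd_trace_zero[OF \<sigma>psd[OF that(1)] _ that(2,3)] t_eq[OF that(1)] by simp
      then show ?thesis using True by simp
    next
      case False
      have "dim_row (\<sigma> l) = k" "dim_col (\<sigma> l) = k" by (simp_all add: \<sigma>_def)
      then show ?thesis using that False by (simp add: \<rho>1_def)
    qed
    have part2: "U_positive k (1\<^sub>m k) (\<rho>1 l) \<and> U_positive n UB (D l) \<and>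
       U_density (k*n) (kron (1\<^sub>m k) UB) (kron (\<rho>1 l) (D l))" if l: "l < K" for l
    proof (intro conjI)
      show "U_positive k (1\<^sub>m k) (\<rho>1 l)"
        using \<rho>1c[of l] \<rho>1psd[OF l] by (simp add: U_positive_def)
      show "U_positive n UB (D l)" using D l by (simp add: U_density_def)
      have Dpsd: "psd n (cadj UB * D l)" using D l by (simp add: U_density_def U_positive_def)
      have Dtr: "mtrace (cadj UB * D l) = 1" using D l by (simp add: U_density_def)
      show "U_density (k*n) (kron (1\<^sub>m k) UB) (kron (\<rho>1 l) (D l))"
        unfolding U_density_def U_positive_def
      proof (intro conjI)
        show "kron (\<rho>1 l) (D l) \<in> carrier_mat (k*n) (k*n)" by (rule kron_carrier[OF \<rho>1c Dc[OF l]])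
        show "psd (k*n) (cadj (kron (1\<^sub>m k) UB) * kron (\<rho>1 l) (D l))"
          unfolding kron_cadj_kron[OF UBc \<rho>1c Dc[OF l]] by (rule psd_kron[OF \<rho>1psd[OF l] Dpsd])
        show "mtrace (cadj (kron (1\<^sub>m k) UB) * kron (\<rho>1 l) (D l)) = 1"
          unfolding mtrace_kron[OF \<rho>1c Dc[OF l] UBc] using \<rho>1tr[OF l] Dtr by simp
      qed
    qed
    have part1: "U_density (k*n) (kron (1\<^sub>m k) UB) (blockmap k m n \<psi> S)"
      by (rule channel_density[OF UA UB ch Sc Sd])
    have part3: "blockmap k m n \<psi> S = msum (k*n) (\<lambda>l. complex_of_real (t l) \<cdot>\<^sub>m kron (\<rho>1 l) (D l)) K"
      proof (rule eq_matI)
        have Mc: "\<forall>l<K. complex_of_real (t l) \<cdot>\<^sub>m kron (\<rho>1 l) (D l) \<in> carrier_mat (k*n) (k*n)"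
          using kron_carrier[OF \<rho>1c Dc] by simp
        have Mc': "msum (k*n) (\<lambda>l. complex_of_real (t l) \<cdot>\<^sub>m kron (\<rho>1 l) (D l)) K \<in> carrier_mat (k*n) (k*n)"
          by (rule msum_carrier[OF Mc])
        then show "dim_row (blockmap k m n \<psi> S) = dim_row (msum (k*n) (\<lambda>l. complex_of_real (t l) \<cdot>\<^sub>m kron (\<rho>1 l) (D l)) K)"
          "dim_col (blockmap k m n \<psi> S) = dim_col (msum (k*n) (\<lambda>l. complex_of_real (t l) \<cdot>\<^sub>m kron (\<rho>1 l) (D l)) K)"
          by (auto simp: blockmap_def)
        fix x y assume "x < dim_row (msum (k*n) (\<lambda>l. complex_of_real (t l) \<cdot>\<^sub>m kron (\<rho>1 l) (D l)) K)"
          "y < dim_col (msum (k*n) (\<lambda>l. complex_of_real (t l) \<cdot>\<^sub>m kron (\<rho>1 l) (D l)) K)"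
        then have xy: "x < k*n" "y < k*n" using Mc' by auto
        define a where "a = x div n"
        define i where "i = x mod n"
        define b where "b = y div n"
        define j where "j = y mod n"
        have d: "a < k" "i < n" "b < k" "j < n" using divmod_lt xy unfolding a_def i_def b_def j_def by auto
        have x: "x = a*n+i" and y: "y = b*n+j" unfolding a_def i_def b_def j_def by simp_all
        have "blockmap k m n \<psi> S $$ (a*n+i, b*n+j) = \<psi> (blk m S a b) $$ (i,j)"
          by (rule blockmap_entry'[OF d(1,3,2,4)])
        also have "\<dots> = msum n (\<lambda>l. mtrace (F l * blk m S a b) \<cdot>\<^sub>m D l) K $$ (i,j)"
          using form by simp
        also have "\<dots> = (\<Sum>l<K. (mtrace (F l * blk m S a b) \<cdot>\<^sub>m D l) $$ (i,j))"
          using Dc d by (intro msum_entry) auto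
        also have "\<dots> = (\<Sum>l<K. \<sigma> l $$ (a,b) * D l $$ (i,j))"
        proof (intro sum.cong refl)
          fix l assume "l \<in> {..<K}"
          then have l: "l < K" by simp
          show "(mtrace (F l * blk m S a b) \<cdot>\<^sub>m D l) $$ (i,j) = \<sigma> l $$ (a,b) * D l $$ (i,j)"
            using smult_entry[OF Dc[OF l] d(2,4)] \<sigma>e[OF l d(1,3)] by simp
        qed
        also have "\<dots> = (\<Sum>l<K. complex_of_real (t l) * \<rho>1 l $$ (a,b) * D l $$ (i,j))"
          using t\<rho> d by (intro sum.cong refl) auto
        also have "\<dots> = (\<Sum>l<K. (complex_of_real (t l) \<cdot>\<^sub>m kron (\<rho>1 l) (D l)) $$ (a*n+i, b*n+j))"
        proof (intro sum.cong refl)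
          fix l assume "l \<in> {..<K}"
          then have l: "l < K" by simp
          have "a*n+i < k*n" "b*n+j < k*n" using d adm_lt by auto
          then show "complex_of_real (t l) * \<rho>1 l $$ (a,b) * D l $$ (i,j) = (complex_of_real (t l) \<cdot>\<^sub>m kron (\<rho>1 l) (D l)) $$ (a*n+i, b*n+j)"
            using kron_entry'[OF \<rho>1c[of l] Dc[OF l] d(1,3,2,4)] smult_entry[OF kron_carrier[OF \<rho>1c[of l] Dc[OF l]]] by simp
        qed
        also have "\<dots> = msum (k*n) (\<lambda>l. complex_of_real (t l) \<cdot>\<^sub>m kron (\<rho>1 l) (D l)) K $$ (a*n+i, b*n+j)"
          using xy by (intro msum_entry[symmetric, OF Mc]) (auto simp: x y)
        finally show "blockmap k m n \<psi> S $$ (x, y) = msum (k*n) (\<lambda>l. complex_of_real (t l) \<cdot>\<^sub>m kron (\<rho>1 l) (D l)) K $$ (x, y)"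
          unfolding x y .
      qed
    show "W_separable k n (1\<^sub>m k) UB (blockmap k m n \<psi> S)"
      unfolding W_separable_def using part1 part2 part3 t_nonneg sum_t by blast
  qed
qed

definition Emat :: "nat \<Rightarrow> nat \<Rightarrow> nat \<Rightarrow> complex mat" where
  "Emat m a b = mat m m (\<lambda>(i,j). if i = a \<and> j = b then 1 else 0)"

lemma Emat_carrier[simp]: "Emat m a b \<in> carrier_mat m m"
  by (simp add: Emat_def)

lemma Emat_entry: "i < m \<Longrightarrow> j < m \<Longrightarrow> Emat m a b $$ (i,j) = (if i = a \<and> j = b then 1 else 0)"
  by (simp add: Emat_def)

lemma U_Emat_entry:
  assumes U: "U \<in> carrier_mat m m" and a: "a < m" and ij: "i < m" "j < m"
  shows "(U * Emat m a b) $$ (i,j) = (if j = b then U $$ (i,a) else 0)"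
proof -
  have "(U * Emat m a b) $$ (i,j) = (\<Sum>p<m. U$$(i,p) * Emat m a b $$ (p,j))"
    by (rule mult_entry[OF U Emat_carrier ij])
  also have "\<dots> = (\<Sum>p<m. U$$(i,p) * (if p = a then (if j = b then 1 else 0) else 0))"
    by (intro sum.cong refl) (use ij in \<open>auto simp: Emat_entry\<close>)
  also have "\<dots> = U$$(i,a) * (if j = b then 1 else 0)"
    by (rule sum_delta_r[OF a])
  finally show ?thesis by simp
qed

lemma mtrace_Emat: "a < m \<Longrightarrow> b < m \<Longrightarrow> mtrace (Emat m a b) = (if a = b then 1 else 0)"
proof (cases "a = b")
  case False
  then have "\<And>i. \<not> (i = a \<and> i = b)" by auto
  then show ?thesis using False by (auto simp: mtrace_def Emat_def intro!: sum.neutral)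
qed (simp add: mtrace_def Emat_def)

lemma mult_if_one: "(x::complex) * (if P then 1 else 0) = (if P then x else 0)" by simp

lemma mat_decomp:
  assumes X: "X \<in> carrier_mat m m"
  shows "X = msum m (\<lambda>x. X$$(x div m, x mod m) \<cdot>\<^sub>m Emat m (x div m) (x mod m)) (m*m)"
proof -
  have C: "\<forall>x<m*m. X$$(x div m, x mod m) \<cdot>\<^sub>m Emat m (x div m) (x mod m) \<in> carrier_mat m m" by simp
  show ?thesis
  proof (rule eq_matI)
    fix i j assume ij: "i < dim_row (msum m (\<lambda>x. X$$(x div m, x mod m) \<cdot>\<^sub>m Emat m (x div m) (x mod m)) (m*m))"
      "j < dim_col (msum m (\<lambda>x. X$$(x div m, x mod m) \<cdot>\<^sub>m Emat m (x div m) (x mod m)) (m*m))"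
    then have ij: "i < m" "j < m" using msum_carrier[OF C] by auto
    have "msum m (\<lambda>x. X$$(x div m, x mod m) \<cdot>\<^sub>m Emat m (x div m) (x mod m)) (m*m) $$ (i,j)
       = (\<Sum>x<m*m. (X$$(x div m, x mod m) \<cdot>\<^sub>m Emat m (x div m) (x mod m)) $$ (i,j))"
      by (rule msum_entry[OF C ij])
    also have "\<dots> = (\<Sum>a<m. \<Sum>b<m. (X$$(a, b) \<cdot>\<^sub>m Emat m a b) $$ (i,j))"
      by (subst sum_split_mult) (intro sum.cong refl, simp)
    also have "\<dots> = (\<Sum>a<m. if a = i then (\<Sum>b<m. if b = j then X$$(i,j) else 0) else 0)"
      by (intro sum.cong refl) (use ij in \<open>auto simp: Emat_entry smult_entry[OF Emat_carrier] mult_if_one sum.delta sum.delta'\<close>)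
    also have "\<dots> = X$$(i,j)" using ij by simp
    finally show "X $$ (i,j) = msum m (\<lambda>x. X$$(x div m, x mod m) \<cdot>\<^sub>m Emat m (x div m) (x mod m)) (m*m) $$ (i,j)"
      by simp
  qed (use X msum_carrier[OF C] in auto)
qed

lemma lin_comp:
  assumes L: "lin_map m n \<psi>" and U: "U \<in> carrier_mat m m"
  shows "lin_map m n (\<lambda>Y. \<psi> (U * Y))"
  unfolding lin_map_def
proof (intro conjI ballI allI)
  fix A :: "complex mat" assume A: "A \<in> carrier_mat m m"
  show "\<psi> (U * A) \<in> carrier_mat n n" using lin_carrier[OF L] U A by auto
  fix c :: complex
  show "\<psi> (U * (c \<cdot>\<^sub>m A)) = c \<cdot>\<^sub>m \<psi> (U * A)"
    using mult_smult_distrib[OF U A] lin_smult[OF L] U A by auto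
next
  fix A B :: "complex mat" assume A: "A \<in> carrier_mat m m" and B: "B \<in> carrier_mat m m"
  show "\<psi> (U * (A + B)) = \<psi> (U * A) + \<psi> (U * B)"
    using mult_add_distrib_mat[OF U A B] lin_add[OF L] U A B by auto
qed

lemma all_split:
  assumes "\<And>a i b j. a < k \<Longrightarrow> i < d \<Longrightarrow> b < k \<Longrightarrow> j < d \<Longrightarrow> P (a*d+i) (b*d+j)"
    and "x < k*d" "y < (k::nat)*d"
  shows "P x y"
proof -
  have d: "x div d < k" "x mod d < d" "y div d < k" "y mod d < d" using divmod_lt assms(2,3) by auto
  have "P ((x div d)*d + x mod d) ((y div d)*d + y mod d)" using assms(1)[OF d] .
  then show ?thesis by simp
qed

lemma max_ent:
  assumes m: "0 < m" and UA: "unitary_mat m UA"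
  defines "S \<equiv> mat (m*m) (m*m) (\<lambda>(x,y). if y mod m = y div m then UA $$ (x mod m, x div m) / of_nat m else 0)"
  shows "S \<in> carrier_mat (m*m) (m*m)" "U_density (m*m) (kron (1\<^sub>m m) UA) S"
    and "\<And>a b. a < m \<Longrightarrow> b < m \<Longrightarrow> complex_of_nat m \<cdot>\<^sub>m blk m S a b = UA * Emat m a b"
proof -
  have UAc: "UA \<in> carrier_mat m m" using unitaryD[OF UA] by simp
  show Sc: "S \<in> carrier_mat (m*m) (m*m)" by (simp add: S_def)
  have Se: "S $$ (a*m+i, b*m+j) = (if j = b then UA $$ (i,a) / of_nat m else 0)"
    if "a < m" "i < m" "b < m" "j < m" for a i b j
    using that adm_lt[of a m i m] adm_lt[of b m j m] by (simp add: S_def)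
  define \<Omega> where "\<Omega> = cadj (kron (1\<^sub>m m) UA) * S"
  have \<Omega>c: "\<Omega> \<in> carrier_mat (m*m) (m*m)" unfolding \<Omega>_def using Sc kron_carrier[OF _ UAc, of "1\<^sub>m m" m] by auto
  have \<Omega>e: "\<Omega> $$ (a*m+i, b*m+j) = (if i = a \<and> j = b then 1 / of_nat m else 0)"
    if d: "a < m" "i < m" "b < m" "j < m" for a i b j
  proof -
    have "\<Omega> $$ (a*m+i, b*m+j) = (\<Sum>p<m. cnj (UA$$(p,i)) * S $$ (a*m+p, b*m+j))"
      unfolding \<Omega>_def by (rule kron1_cadj_mult_entry[OF UAc Sc d(1) d(3) d(2) d(4)])
    also have "\<dots> = (\<Sum>p<m. cnj (UA$$(p,i)) * (if j = b then UA $$ (p,a) / of_nat m else 0))"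
      using d by (intro sum.cong refl) (simp add: Se)
    also have "\<dots> = (if j = b then (\<Sum>p<m. cnj (UA$$(p,i)) * UA $$ (p,a)) / of_nat m else 0)"
      by (simp add: sum_divide_distrib)
    also have "(\<Sum>p<m. cnj (UA$$(p,i)) * UA $$ (p,a)) = (cadj UA * UA) $$ (i,a)"
      by (rule cadj_mult_entry[OF UAc UAc d(2) d(1), symmetric])
    also have "\<dots> = (if i = a then 1 else 0)" using unitaryD[OF UA] d by simp
    finally show ?thesis by auto
  qed
  have \<Omega>psd: "psd (m*m) \<Omega>"
  proof (rule psd_rank1[where N=1 and u="\<lambda>r x. if x div m = x mod m then complex_of_real (1 / sqrt (real m)) else 0"])
    show "\<Omega> \<in> carrier_mat (m*m) (m*m)" by (rule \<Omega>c)
    have ss: "complex_of_real (1 / sqrt (real m)) * cnj (complex_of_real (1 / sqrt (real m))) = 1 / of_nat m"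
    proof -
      have e: "sqrt (real m) * sqrt (real m) = real m" by simp
      have "(1 / sqrt (real m)) * (1 / sqrt (real m)) = 1 / real m"
        by (simp only: times_divide_times_eq e mult_1)
      then have "complex_of_real (1 / sqrt (real m)) * complex_of_real (1 / sqrt (real m)) = complex_of_real (1 / real m)"
        by (metis of_real_mult)
      then show ?thesis by simp
    qed
    show "\<forall>x<m*m. \<forall>y<m*m. \<Omega> $$ (x,y) = (\<Sum>r<(1::nat). (if x div m = x mod m then complex_of_real (1 / sqrt (real m)) else 0) *
        cnj (if y div m = y mod m then complex_of_real (1 / sqrt (real m)) else 0))"
    proof (intro allI impI)
      fix x y assume xy: "x < m*m" "y < m*m"
      show "\<Omega> $$ (x,y) = (\<Sum>r<(1::nat). (if x div m = x mod m then complex_of_real (1 / sqrt (real m)) else 0) *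
        cnj (if y div m = y mod m then complex_of_real (1 / sqrt (real m)) else 0))"
        by (rule all_split[OF _ xy]) (use \<Omega>e ss in \<open>auto simp: card_lessThan\<close>)
    qed
  qed
  have \<Omega>tr: "mtrace \<Omega> = 1"
  proof -
    have "mtrace \<Omega> = (\<Sum>x<m*m. \<Omega> $$ (x,x))" by (rule mtrace_sum[OF \<Omega>c])
    also have "\<dots> = (\<Sum>a<m. \<Sum>i<m. \<Omega> $$ (a*m+i, a*m+i))" by (rule sum_split_mult)
    also have "\<dots> = (\<Sum>a<m. \<Sum>i<m. if i = a then 1 / of_nat m else 0)"
      by (intro sum.cong refl) (simp add: \<Omega>e)
    also have "\<dots> = of_nat m * (1 / of_nat m)" by simp
    also have "\<dots> = 1" using m by simp
    finally show ?thesis .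
  qed
  show "U_density (m*m) (kron (1\<^sub>m m) UA) S"
    using Sc \<Omega>psd \<Omega>tr unfolding U_density_def U_positive_def \<Omega>_def by simp
  fix a b assume ab: "a < m" "b < m"
  show "complex_of_nat m \<cdot>\<^sub>m blk m S a b = UA * Emat m a b"
  proof (rule eq_matI)
    fix i j assume "i < dim_row (UA * Emat m a b)" "j < dim_col (UA * Emat m a b)"
    then have ij: "i < m" "j < m" using UAc by (auto simp: Emat_def)
    show "(complex_of_nat m \<cdot>\<^sub>m blk m S a b) $$ (i,j) = (UA * Emat m a b) $$ (i,j)"
      using ij ab m by (simp add: Se U_Emat_entry[OF UAc ab(1) ij])
  qed (use UAc in \<open>auto simp: Emat_def\<close>)
qed

lemma mtrace_cadj_mult:
  assumes U: "U \<in> carrier_mat n n" and G: "G \<in> carrier_mat n n"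
  shows "mtrace (cadj U * G) = (\<Sum>s<n. \<Sum>p<n. cnj (U$$(p,s)) * G$$(p,s))"
proof -
  have "mtrace (cadj U * G) = (\<Sum>s<n. (cadj U * G) $$ (s,s))" using U G by (intro mtrace_sum) auto
  also have "\<dots> = (\<Sum>s<n. \<Sum>p<n. cnj (U$$(p,s)) * G$$(p,s))"
  proof (rule sum.cong[OF refl])
    fix s assume "s \<in> {..<n}"
    then show "(cadj U * G) $$ (s,s) = (\<Sum>p<n. cnj (U$$(p,s)) * G$$(p,s))"
      by (intro cadj_mult_entry[OF U G]) auto
  qed
  finally show ?thesis .
qed

lemma EB_holevo:
  assumes m: "0 < m" and UA: "unitary_mat m UA" and UB: "unitary_mat n UB" and ch: "U_channel m n UA UB \<psi>"
    and EB: "U_EB m n UA UB \<psi>"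
  shows "U_Holevo m n UA UB \<psi>"
proof -
  have UAc: "UA \<in> carrier_mat m m" and UBc: "UB \<in> carrier_mat n n" using UA UB unitaryD by auto
  have L: "lin_map m n \<psi>" using ch by (simp add: U_channel_def)
  have TP: "\<forall>V\<in>carrier_mat m m. mtrace (cadj UB * \<psi> (UA * V)) = mtrace V" using ch by (simp add: U_channel_def)
  define S where "S = mat (m*m) (m*m) (\<lambda>(x,y). if y mod m = y div m then UA $$ (x mod m, x div m) / of_nat m else 0)"
  have Sc: "S \<in> carrier_mat (m*m) (m*m)" using max_ent(1)[OF m UA] unfolding S_def .
  have Sd: "U_density (m*m) (kron (1\<^sub>m m) UA) S" using max_ent(2)[OF m UA] unfolding S_def .
  have Sblk: "complex_of_nat m \<cdot>\<^sub>m blk m S a b = UA * Emat m a b" if "a < m" "b < m" for a b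
    using max_ent(3)[OF m UA that] unfolding S_def .
  have "W_separable m n (1\<^sub>m m) UB (blockmap m m n \<psi> S)" using EB Sc Sd unfolding U_EB_def by blast
  then obtain N :: nat and lam :: "nat \<Rightarrow> real" and \<rho>1 \<rho>2 where
     lam_nn: "\<forall>i<N. 0 \<le> lam i" and
     cond: "\<forall>i<N. U_positive m (1\<^sub>m m) (\<rho>1 i) \<and> U_positive n UB (\<rho>2 i) \<and>
               U_density (m*n) (kron (1\<^sub>m m) UB) (kron (\<rho>1 i) (\<rho>2 i))" and
     Teq: "blockmap m m n \<psi> S = msum (m*n) (\<lambda>i. complex_of_real (lam i) \<cdot>\<^sub>m kron (\<rho>1 i) (\<rho>2 i)) N"
    unfolding W_separable_def by blast
  have \<rho>1c: "\<rho>1 l \<in> carrier_mat m m" if "l < N" for l using cond that by (simp add: U_positive_def)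
  have \<rho>2c: "\<rho>2 l \<in> carrier_mat n n" if "l < N" for l using cond that by (simp add: U_positive_def)
  have \<rho>1psd: "psd m (\<rho>1 l)" if "l < N" for l
  proof -
    have "psd m (1\<^sub>m m * \<rho>1 l)" using cond that by (simp add: U_positive_def)
    then show ?thesis using \<rho>1c[OF that] by simp
  qed
  have \<rho>2psd: "psd n (cadj UB * \<rho>2 l)" if "l < N" for l using cond that by (simp add: U_positive_def)
  define c where "c l = Re (mtrace (cadj UB * \<rho>2 l))" for l
  have c_eq: "mtrace (cadj UB * \<rho>2 l) = complex_of_real (c l)" if "l < N" for l
    unfolding c_def by (rule psd_trace(1)[OF \<rho>2psd[OF that]])
  have cpos: "c l > 0" if l: "l < N" for l
  proof -
    have "mtrace (cadj (kron (1\<^sub>m m) UB) * kron (\<rho>1 l) (\<rho>2 l)) = 1" using cond l by (simp add: U_density_def)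
    then have "mtrace (\<rho>1 l) * mtrace (cadj UB * \<rho>2 l) = 1" unfolding mtrace_kron[OF \<rho>1c[OF l] \<rho>2c[OF l] UBc] .
    then have "complex_of_real (Re (mtrace (\<rho>1 l))) * complex_of_real (c l) = 1"
      using psd_trace(1)[OF \<rho>1psd[OF l]] c_eq[OF l] by simp
    then have "Re (mtrace (\<rho>1 l)) * c l = 1" by (metis of_real_1 of_real_eq_iff of_real_mult)
    moreover have "c l \<ge> 0" unfolding c_def by (rule psd_trace(2)[OF \<rho>2psd[OF l]])
    ultimately show ?thesis by (cases "c l = 0") auto
  qed
  have Mc: "\<forall>l<N. complex_of_real (lam l) \<cdot>\<^sub>m kron (\<rho>1 l) (\<rho>2 l) \<in> carrier_mat (m*n) (m*n)"
    using kron_carrier[OF \<rho>1c \<rho>2c] by simp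
  have Gform: "\<psi> (UA * Emat m a b) $$ (s,t) = of_nat m * (\<Sum>l<N. complex_of_real (lam l) * (\<rho>1 l $$ (a,b) * \<rho>2 l $$ (s,t)))"
    if ab: "a < m" "b < m" and st: "s < n" "t < n" for a b s t
  proof -
    have "\<psi> (UA * Emat m a b) = of_nat m \<cdot>\<^sub>m \<psi> (blk m S a b)"
      using Sblk[OF ab] lin_smult[OF L blk_carrier] by metis
    then have "\<psi> (UA * Emat m a b) $$ (s,t) = of_nat m * \<psi> (blk m S a b) $$ (s,t)"
      using smult_entry[OF lin_carrier[OF L blk_carrier] st] by simp
    also have "\<psi> (blk m S a b) $$ (s,t) = blockmap m m n \<psi> S $$ (a*n+s, b*n+t)"
      by (rule blockmap_entry'[symmetric, OF ab st])
    also have "\<dots> = (\<Sum>l<N. (complex_of_real (lam l) \<cdot>\<^sub>m kron (\<rho>1 l) (\<rho>2 l)) $$ (a*n+s, b*n+t))"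
      unfolding Teq by (rule msum_entry[OF Mc]) (use adm_lt ab st in auto)
    also have "\<dots> = (\<Sum>l<N. complex_of_real (lam l) * (\<rho>1 l $$ (a,b) * \<rho>2 l $$ (s,t)))"
    proof (intro sum.cong refl)
      fix l assume "l \<in> {..<N}"
      then have l: "l < N" by simp
      have "a*n+s < m*n" "b*n+t < m*n" using ab st adm_lt by auto
      then show "(complex_of_real (lam l) \<cdot>\<^sub>m kron (\<rho>1 l) (\<rho>2 l)) $$ (a*n+s, b*n+t) = complex_of_real (lam l) * (\<rho>1 l $$ (a,b) * \<rho>2 l $$ (s,t))"
        using smult_entry[OF kron_carrier[OF \<rho>1c[OF l] \<rho>2c[OF l]]] kron_entry'[OF \<rho>1c[OF l] \<rho>2c[OF l] ab st] by simp
    qed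
    finally show ?thesis .
  qed
  define coef where "coef l = real m * lam l * c l" for l
  define D where "D l = complex_of_real (1 / c l) \<cdot>\<^sub>m \<rho>2 l" for l
  define F where "F l = complex_of_real (coef l) \<cdot>\<^sub>m (transpose_mat (\<rho>1 l) * cadj UA)" for l
  have Tc: "transpose_mat (\<rho>1 l) \<in> carrier_mat m m" if "l < N" for l using \<rho>1c[OF that] by simp
  have Fc: "F l \<in> carrier_mat m m" if "l < N" for l using Tc[OF that] UAc by (simp add: F_def)
  have coef_nn: "coef l \<ge> 0" if "l < N" for l using lam_nn cpos[OF that] that by (simp add: coef_def)
  have FUA: "F l * UA = complex_of_real (coef l) \<cdot>\<^sub>m transpose_mat (\<rho>1 l)" if l: "l < N" for l
  proof -
    have "F l * UA = complex_of_real (coef l) \<cdot>\<^sub>m ((transpose_mat (\<rho>1 l) * cadj UA) * UA)"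
      unfolding F_def using Tc[OF l] UAc by (intro mult_smult_assoc_mat) auto
    also have "(transpose_mat (\<rho>1 l) * cadj UA) * UA = transpose_mat (\<rho>1 l) * (cadj UA * UA)"
      using Tc[OF l] UAc by (intro assoc_mult_mat) auto
    also have "\<dots> = transpose_mat (\<rho>1 l)" using unitaryD[OF UA] Tc[OF l] by simp
    finally show ?thesis .
  qed
  have trF: "mtrace (F l * \<rho>) = complex_of_real (coef l) * (\<Sum>a<m. \<Sum>b<m. \<rho>1 l $$ (a,b) * (cadj UA * \<rho>) $$ (a,b))"
    if l: "l < N" and \<rho>: "\<rho> \<in> carrier_mat m m" for l \<rho>
  proof -
    have Xc: "cadj UA * \<rho> \<in> carrier_mat m m" using UAc \<rho> by auto
    have "F l * \<rho> = complex_of_real (coef l) \<cdot>\<^sub>m ((transpose_mat (\<rho>1 l) * cadj UA) * \<rho>)"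
      unfolding F_def using Tc[OF l] UAc \<rho> by (intro mult_smult_assoc_mat) auto
    also have "(transpose_mat (\<rho>1 l) * cadj UA) * \<rho> = transpose_mat (\<rho>1 l) * (cadj UA * \<rho>)"
      using Tc[OF l] UAc \<rho> by (intro assoc_mult_mat) auto
    finally have "mtrace (F l * \<rho>) = complex_of_real (coef l) * mtrace (transpose_mat (\<rho>1 l) * (cadj UA * \<rho>))"
      using mtrace_smult[of "transpose_mat (\<rho>1 l) * (cadj UA * \<rho>)" m] Tc[OF l] Xc by simp
    also have "mtrace (transpose_mat (\<rho>1 l) * (cadj UA * \<rho>)) = (\<Sum>i<m. \<Sum>j<m. transpose_mat (\<rho>1 l) $$ (i,j) * (cadj UA * \<rho>) $$ (j,i))"
      by (rule mtrace_mult[OF Tc[OF l] Xc])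
    also have "\<dots> = (\<Sum>i<m. \<Sum>j<m. \<rho>1 l $$ (j,i) * (cadj UA * \<rho>) $$ (j,i))"
      using \<rho>1c[OF l] by (intro sum.cong refl) auto
    also have "\<dots> = (\<Sum>a<m. \<Sum>b<m. \<rho>1 l $$ (a,b) * (cadj UA * \<rho>) $$ (a,b))"
      by (rule sum.swap)
    finally show ?thesis .
  qed
  have part1: "U_density n UB (D l)" if l: "l < N" for l
      unfolding U_density_def U_positive_def
    proof (intro conjI)
      show Dc: "D l \<in> carrier_mat n n" using \<rho>2c[OF l] by (simp add: D_def)
      have e: "cadj UB * D l = complex_of_real (1 / c l) \<cdot>\<^sub>m (cadj UB * \<rho>2 l)"
        unfolding D_def using UBc \<rho>2c[OF l] by (intro mult_smult_distrib) auto
      show "psd n (cadj UB * D l)" unfolding e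
        by (rule psd_smult[OF \<rho>2psd[OF l]]) (use cpos[OF l] in simp)
      have "cadj UB * \<rho>2 l \<in> carrier_mat n n" using UBc \<rho>2c[OF l] by auto
      then show "mtrace (cadj UB * D l) = 1" unfolding e
        using mtrace_smult[of "cadj UB * \<rho>2 l" n] c_eq[OF l] cpos[OF l] by simp
    qed
  have part2: "F l \<in> carrier_mat m m \<and> psd m (F l * UA)" if l: "l < N" for l
  proof
    show "F l \<in> carrier_mat m m" by (rule Fc[OF l])
    show "psd m (F l * UA)" unfolding FUA[OF l]
      by (rule psd_smult[OF psd_transpose[OF \<rho>1psd[OF l]] coef_nn[OF l]])
  qed
  have part3: "msum m (\<lambda>l. F l * UA) N = 1\<^sub>m m"
  proof -
    have Pc: "\<forall>l<N. F l * UA \<in> carrier_mat m m" using Fc UAc by (auto intro: mult_carrier_mat)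
    show "msum m (\<lambda>l. F l * UA) N = 1\<^sub>m m"
    proof (rule eq_matI)
      fix i j assume "i < dim_row (1\<^sub>m m)" "j < dim_col (1\<^sub>m m)"
      then have ij: "i < m" "j < m" by auto
      have "msum m (\<lambda>l. F l * UA) N $$ (i,j) = (\<Sum>l<N. (F l * UA) $$ (i,j))"
        by (rule msum_entry[OF Pc ij])
      also have "\<dots> = (\<Sum>l<N. of_nat m * (complex_of_real (lam l) * \<rho>1 l $$ (j,i) * complex_of_real (c l)))"
      proof (intro sum.cong refl)
        fix l assume "l \<in> {..<N}"
        then have l: "l < N" by simp
        show "(F l * UA) $$ (i,j) = of_nat m * (complex_of_real (lam l) * \<rho>1 l $$ (j,i) * complex_of_real (c l))"
          unfolding FUA[OF l] using smult_entry[OF Tc[OF l] ij] \<rho>1c[OF l] ij by (simp add: coef_def)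
      qed
      also have "\<dots> = mtrace (cadj UB * \<psi> (UA * Emat m j i))"
      proof -
        have Gc: "\<psi> (UA * Emat m j i) \<in> carrier_mat n n" using lin_carrier[OF L] UAc by auto
        have "mtrace (cadj UB * \<psi> (UA * Emat m j i)) = (\<Sum>s<n. \<Sum>p<n. cnj (UB$$(p,s)) * \<psi> (UA * Emat m j i) $$ (p,s))"
          by (rule mtrace_cadj_mult[OF UBc Gc])
        also have "\<dots> = (\<Sum>s<n. \<Sum>p<n. \<Sum>l<N. of_nat m * (complex_of_real (lam l) * \<rho>1 l $$ (j,i)) * (cnj (UB$$(p,s)) * \<rho>2 l $$ (p,s)))"
        proof (intro sum.cong refl)
          fix s p assume "s \<in> {..<n}" "p \<in> {..<n}"
          then show "cnj (UB$$(p,s)) * \<psi> (UA * Emat m j i) $$ (p,s) = (\<Sum>l<N. of_nat m * (complex_of_real (lam l) * \<rho>1 l $$ (j,i)) * (cnj (UB$$(p,s)) * \<rho>2 l $$ (p,s)))"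
            using Gform[OF ij(2) ij(1)] by (simp add: sum_distrib_left mult_ac)
        qed
        also have "\<dots> = (\<Sum>l<N. \<Sum>s<n. \<Sum>p<n. of_nat m * (complex_of_real (lam l) * \<rho>1 l $$ (j,i)) * (cnj (UB$$(p,s)) * \<rho>2 l $$ (p,s)))"
          by (rule swap3b[symmetric])
        also have "\<dots> = (\<Sum>l<N. of_nat m * (complex_of_real (lam l) * \<rho>1 l $$ (j,i)) * mtrace (cadj UB * \<rho>2 l))"
          by (intro sum.cong refl) (simp add: mtrace_cadj_mult[OF UBc \<rho>2c] sum_distrib_left)
        also have "\<dots> = (\<Sum>l<N. of_nat m * (complex_of_real (lam l) * \<rho>1 l $$ (j,i) * complex_of_real (c l)))"
          by (intro sum.cong refl) (simp add: c_eq)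
        finally show ?thesis by simp
      qed
      also have "\<dots> = mtrace (Emat m j i)" using TP by simp
      also have "\<dots> = 1\<^sub>m m $$ (i,j)" using ij by (simp add: mtrace_Emat)
      finally show "msum m (\<lambda>l. F l * UA) N $$ (i,j) = 1\<^sub>m m $$ (i,j)" .
    qed (use msum_carrier[OF Pc] in auto)
  qed
  have part4: "\<psi> \<rho> = msum n (\<lambda>l. mtrace (F l * \<rho>) \<cdot>\<^sub>m D l) N" if \<rho>: "\<rho> \<in> carrier_mat m m" for \<rho>
  proof -
    define X where "X = cadj UA * \<rho>"
    have Xc: "X \<in> carrier_mat m m" using UAc \<rho> by (auto simp: X_def)
    have L2: "lin_map m n (\<lambda>Y. \<psi> (UA * Y))" by (rule lin_comp[OF L UAc])
    have Ec: "\<forall>x<m*m. X$$(x div m, x mod m) \<cdot>\<^sub>m Emat m (x div m) (x mod m) \<in> carrier_mat m m" by simp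
    have "\<psi> \<rho> = \<psi> (UA * X)" unfolding X_def using unitary_cancel[OF UA \<rho>] by simp
    also have "\<dots> = \<psi> (UA * msum m (\<lambda>x. X$$(x div m, x mod m) \<cdot>\<^sub>m Emat m (x div m) (x mod m)) (m*m))"
      using mat_decomp[OF Xc] by simp
    also have "\<dots> = msum n (\<lambda>x. \<psi> (UA * (X$$(x div m, x mod m) \<cdot>\<^sub>m Emat m (x div m) (x mod m)))) (m*m)"
      by (rule lin_msum[OF L2 Ec])
    also have "\<dots> = msum n (\<lambda>x. X$$(x div m, x mod m) \<cdot>\<^sub>m \<psi> (UA * Emat m (x div m) (x mod m))) (m*m)"
      using lin_smult[OF L2 Emat_carrier] by simp
    finally have psi_eq: "\<psi> \<rho> = msum n (\<lambda>x. X$$(x div m, x mod m) \<cdot>\<^sub>m \<psi> (UA * Emat m (x div m) (x mod m))) (m*m)" .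
    have C1: "\<forall>x<m*m. X$$(x div m, x mod m) \<cdot>\<^sub>m \<psi> (UA * Emat m (x div m) (x mod m)) \<in> carrier_mat n n"
      using lin_carrier[OF L] UAc by auto
    have C2: "\<forall>l<N. mtrace (F l * \<rho>) \<cdot>\<^sub>m D l \<in> carrier_mat n n" using \<rho>2c by (simp add: D_def)
    show "\<psi> \<rho> = msum n (\<lambda>l. mtrace (F l * \<rho>) \<cdot>\<^sub>m D l) N"
      unfolding psi_eq
    proof (rule eq_matI)
      fix s t assume "s < dim_row (msum n (\<lambda>l. mtrace (F l * \<rho>) \<cdot>\<^sub>m D l) N)"
        "t < dim_col (msum n (\<lambda>l. mtrace (F l * \<rho>) \<cdot>\<^sub>m D l) N)"
      then have st: "s < n" "t < n" using msum_carrier[OF C2] by auto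
      let ?f = "\<lambda>l a b. of_nat m * complex_of_real (lam l) * (\<rho>1 l $$ (a,b) * X $$ (a,b)) * \<rho>2 l $$ (s,t)"
      have "msum n (\<lambda>x. X$$(x div m, x mod m) \<cdot>\<^sub>m \<psi> (UA * Emat m (x div m) (x mod m))) (m*m) $$ (s,t)
         = (\<Sum>x<m*m. (X$$(x div m, x mod m) \<cdot>\<^sub>m \<psi> (UA * Emat m (x div m) (x mod m))) $$ (s,t))"
        by (rule msum_entry[OF C1 st])
      also have "\<dots> = (\<Sum>a<m. \<Sum>b<m. (X$$(a, b) \<cdot>\<^sub>m \<psi> (UA * Emat m a b)) $$ (s,t))"
        by (subst sum_split_mult) (intro sum.cong refl, simp)
      also have "\<dots> = (\<Sum>a<m. \<Sum>b<m. \<Sum>l<N. ?f l a b)"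
      proof (intro sum.cong refl)
        fix a b assume ab: "a \<in> {..<m}" "b \<in> {..<m}"
        have Gc: "\<psi> (UA * Emat m a b) \<in> carrier_mat n n" using lin_carrier[OF L] UAc by auto
        show "(X$$(a, b) \<cdot>\<^sub>m \<psi> (UA * Emat m a b)) $$ (s,t) = (\<Sum>l<N. ?f l a b)"
          using smult_entry[OF Gc st] Gform[of a b s t] ab st by (simp add: sum_distrib_left mult_ac)
      qed
      also have "\<dots> = (\<Sum>l<N. \<Sum>a<m. \<Sum>b<m. ?f l a b)"
        by (rule swap3b[symmetric])
      also have "\<dots> = (\<Sum>l<N. (mtrace (F l * \<rho>) \<cdot>\<^sub>m D l) $$ (s,t))"
      proof (intro sum.cong refl)
        fix l assume "l \<in> {..<N}"
        then have l: "l < N" by simp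
        have "(mtrace (F l * \<rho>) \<cdot>\<^sub>m D l) $$ (s,t) = mtrace (F l * \<rho>) * (complex_of_real (1 / c l) * \<rho>2 l $$ (s,t))"
        proof -
          have Dc': "D l \<in> carrier_mat n n" using \<rho>2c[OF l] by (simp add: D_def)
          have e2: "D l $$ (s,t) = complex_of_real (1 / c l) * \<rho>2 l $$ (s,t)"
            unfolding D_def by (rule smult_entry[OF \<rho>2c[OF l] st])
          show ?thesis unfolding smult_entry[OF Dc' st] e2 ..
        qed
        also have "\<dots> = complex_of_real (coef l) * complex_of_real (1 / c l) * (\<Sum>a<m. \<Sum>b<m. \<rho>1 l $$ (a,b) * X $$ (a,b)) * \<rho>2 l $$ (s,t)"
          unfolding trF[OF l \<rho>] X_def by (simp add: mult_ac)
        also have "complex_of_real (coef l) * complex_of_real (1 / c l) = of_nat m * complex_of_real (lam l)"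
          using cpos[OF l] by (simp add: coef_def field_simps)
        finally show "(\<Sum>a<m. \<Sum>b<m. ?f l a b) = (mtrace (F l * \<rho>) \<cdot>\<^sub>m D l) $$ (s,t)"
          by (simp add: sum_distrib_left sum_distrib_right mult_ac)
      qed
      also have "\<dots> = msum n (\<lambda>l. mtrace (F l * \<rho>) \<cdot>\<^sub>m D l) N $$ (s,t)"
        by (rule msum_entry[symmetric, OF C2 st])
      finally show "msum n (\<lambda>x. X$$(x div m, x mod m) \<cdot>\<^sub>m \<psi> (UA * Emat m (x div m) (x mod m))) (m*m) $$ (s,t) = msum n (\<lambda>l. mtrace (F l * \<rho>) \<cdot>\<^sub>m D l) N $$ (s,t)" .
    qed (use msum_carrier[OF C1] msum_carrier[OF C2] in auto)
  qed
  show ?thesis unfolding U_Holevo_def using part1 part2 part3 part4 by blast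
qed

theorem theorem6p3:
  fixes m n :: nat and UA UB :: "complex mat" and \<psi> :: "complex mat \<Rightarrow> complex mat"
  assumes "0 < m" and "0 < n"
    and "unitary_mat m UA" and "unitary_mat n UB"
    and "U_channel m n UA UB \<psi>"
  shows "U_EB m n UA UB \<psi> \<longleftrightarrow> U_Holevo m n UA UB \<psi>"
proof
  assume "U_EB m n UA UB \<psi>"
  then show "U_Holevo m n UA UB \<psi>" by (rule EB_holevo[OF assms(1) assms(3) assms(4) assms(5)])
next
  assume "U_Holevo m n UA UB \<psi>"
  then show "U_EB m n UA UB \<psi>" by (rule holevo_EB[OF assms(3) assms(4) assms(5)])
qed

end
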